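(* Let $(A,B)$ be a Katsura pair with $B\in M_N(\{0,1\})$ such that the KEP-action $(G_B,E_A)$ is regular. Then every connected component of $\mathcal{J}_{G_B,E_A}$ is either a point or a circle. Moreover, let $C$ be the connectivity matrix of $E_A$, let $\pi:E_A^{-\infty}\to E_C^{-\infty}$ and $\pi_{\mathcal J}:\mathcal{J}_{G_B,E_A}\to E_C^{-\infty}$ be the induced factor maps, and for $v\in E_C^{-\infty}$ let $K(v)=-\min\{k<0: B_{v_{k-1},v_k}=0\}$ (so $K(v)=\infty$ if $B_{v_{k-1},v_k}=0$ for infinitely many $k$), with $K(v)=0$ if this set is empty. Then: (1) if $K(v)=\infty$, then $\pi_{\mathcal J}^{-1}(v)$ is homeomorphic to $\pi^{-1}(v)$, and under this identification $\tilde\sigma$ is the shift $\sigma:\pi^{-1}(v)\to\pi^{-1}(\sigma(v))$; (2) if $K(v)=0$ and $\sup_{k<0}A_{v[k,-1]}=\infty$, then $\pi_{\mathcal J}^{-1}(v)$ is homeomorphic to a circle $\mathbb{T}_v=\{z\in\mathbb{C}:|z|=1\}$, and under these identifications $\tilde\sigma$ is $z\mapsto z^n:\mathbb{T}_v\to\mathbb{T}_{\sigma(v)}$ with $n=A_{v_{-2},v_{-1}}$; (3) if $K(v)=0$ and $\sup_{k<0}A_{v[k,-1]}<\infty$, then $\pi_{\mathcal J}^{-1}(v)$ is a single point; (4) if $0<K(v)<\infty$, then writing $K=K(v)$, $\pi_{\mathcal J}^{-1}(v)$ is homeomorphic to $\pi_{\mathcal J}^{-1}(\sigma^{K}(v))\times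 P_v$, where $P_v$ is the finite set of paths $\mu_{-K}\cdots\mu_{-1}$ in $E_A$ lying over the last $K$ edges of $v$, and cases (2) and (3) describe $\pi_{\mathcal J}^{-1}(\sigma^K(v))$; under these identifications $\tilde\sigma$ is $\mathrm{id}\times\sigma:\pi_{\mathcal J}^{-1}(\sigma^K(v))\times P_v\to\pi_{\mathcal J}^{-1}(\sigma^K(v))\times P_{\sigma(v)}$, $(z,\mu_{-K}\cdots\mu_{-1})\mapsto(z,\mu_{-K}\cdots\mu_{-2})$.
   Context: Katsura pair: $N\in\mathbb{N}$, $A\in M_N(\mathbb{N})$ (nonnegative integers), $B\in M_N(\mathbb{Z})$ with $A_{ij}=0\Rightarrow B_{ij}=0$. Graph $E_A$: vertices $\{1,\dots,N\}$, edges $e_{i,j,m}$ for $0\le m<A_{ij}$, $r(e_{i,j,m})=i$, $s(e_{i,j,m})=j$. Finite paths $\mu_1\cdots\mu_n$ with $s(\mu_i)=r(\mu_{i+1})$; $E^{-\infty}$ = left-infinite paths $\cdots\mu_{-2}\mu_{-1}$ with product topology, shift $\sigma(\cdots\mu_{-2}\mu_{-1})=\cdots\mu_{-3}\mu_{-2}$. The group bundle $\mathbb{Z}\times E_A^0$ (elements $a_i^k$, $a_i^ka_i^l=a_i^{k+l}$) acts by $a_i^k\cdot e_{i,j,m}=e_{i,j,\hat m}$, $a_i^k|_{e_{i,j,m}}=a_j^{\hat k}$, where $kB_{ij}+m=\hat kA_{ij}+\hat m$ and $0\le\hat m<A_{ij}$; this extends to finite paths via $g\cdot(e\nu)=(g\cdot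 e)(g|_e\cdot\nu)$, $g|_{e\nu}=(g|_e)|_\nu$. $G_B$ is the quotient by the elements acting trivially; $(G_B,E_A)$ (the KEP-action) is a faithful self-similar groupoid action, with restrictions descending to $G_B$. Regular: for every $g\in G_B$ there is $K\in\mathbb{N}$ such that $g\cdot\mu=\mu$ and $|\mu|\ge K$ imply $g|_\mu$ is the unit at $s(\mu)$. Limit space: $\mu\sim_{ae}\nu$ in $E_A^{-\infty}$ iff there are a finite $F\subseteq G_B$ and $(g_n)_{n<0}\subseteq F$ with $d(g_n)=r(\mu_n)$ and $g_n\cdot\mu_n\cdots\mu_{-1}=\nu_n\cdots\nu_{-1}$ for all $n<0$; $\mathcal{J}_{G_B,E_A}=E_A^{-\infty}/\sim_{ae}$ (quotient topology), $\tilde\sigma$ induced by $\sigma$. Connectivity matrix: $C_{ij}=1$ if $A_{ij}>0$ and $0$ otherwise; $E_C$ is its graph (one edge $i\to j$ from range $i$ to source $j$ whenever $A_{ij}>0$). $\pi$ sends each edge $e_{i,j,m}$ to the edge of $E_C$ with range $i$ and source $j$; since the action preserves ranges and sources of edges, $\pi$ descends to $\pi_{\mathcal J}$. For $v=\cdots f_{-2}f_{-1}\in E_C^{-\infty}$ write $v_k=s(f_k)$ for $k\le-1$, so $r(f_k)=v_{k-1}$, and $A_{v[k,-1]}=\prod_{j=k}^{-1}A_{v_{j-1},v_j}$. *)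

theory Defs
  imports "HOL-Analysis.Analysis" "HOL-Library.Extended_Nat"
begin

text \<open>Katsura pairs. Vertices are 0..<N (0-based). An edge e_{i,j,m} is the triple (i,j,m);
  its range is i and its source is j.\<close>

type_synonym edge = "nat \<times> nat \<times> nat"
type_synonym grp = "nat \<times> int"  \<comment> \<open>(i,k) represents a_i^k\<close>

definition katsura_pair :: "nat \<Rightarrow> (nat \<Rightarrow> nat \<Rightarrow> nat) \<Rightarrow> (nat \<Rightarrow> nat \<Rightarrow> int) \<Rightarrow> bool" where
  "katsura_pair N A B \<longleftrightarrow> (\<forall>i<N. \<forall>j<N. A i j = 0 \<longrightarrow> B i j = 0)"

definition edges :: "nat \<Rightarrow> (nat \<Rightarrow> nat \<Rightarrow> nat) \<Rightarrow> edge set" where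
  "edges N A = {(i,j,m). i < N \<and> j < N \<and> m < A i j}"

definition er :: "edge \<Rightarrow> nat" where "er e = fst e"
definition es :: "edge \<Rightarrow> nat" where "es e = fst (snd e)"

text \<open>a_i^k . e_{i,j,m} = e_{i,j,mhat}, a_i^k|_{e_{i,j,m}} = a_j^{khat},
  where k B_ij + m = khat A_ij + mhat, 0 \<le> mhat < A_ij.\<close>
definition act_edge :: "(nat \<Rightarrow> nat \<Rightarrow> nat) \<Rightarrow> (nat \<Rightarrow> nat \<Rightarrow> int) \<Rightarrow> grp \<Rightarrow> edge \<Rightarrow> edge" where
  "act_edge A B g e = (case e of (i,j,m) \<Rightarrow>
      (i, j, nat ((snd g * B i j + int m) mod int (A i j))))"

definition restr_edge :: "(nat \<Rightarrow> nat \<Rightarrow> nat) \<Rightarrow> (nat \<Rightarrow> nat \<Rightarrow> int) \<Rightarrow> grp \<Rightarrow> edge \<Rightarrow> grp" where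
  "restr_edge A B g e = (case e of (i,j,m) \<Rightarrow>
      (j, (snd g * B i j + int m) div int (A i j)))"

text \<open>Finite paths are lists [mu_1,...,mu_n] (mu_1 first).\<close>
fun act :: "(nat \<Rightarrow> nat \<Rightarrow> nat) \<Rightarrow> (nat \<Rightarrow> nat \<Rightarrow> int) \<Rightarrow> grp \<Rightarrow> edge list \<Rightarrow> edge list" where
  "act A B g [] = []"
| "act A B g (e # \<mu>) = act_edge A B g e # act A B (restr_edge A B g e) \<mu>"

fun restr :: "(nat \<Rightarrow> nat \<Rightarrow> nat) \<Rightarrow> (nat \<Rightarrow> nat \<Rightarrow> int) \<Rightarrow> grp \<Rightarrow> edge list \<Rightarrow> grp" where
  "restr A B g [] = g"
| "restr A B g (e # \<mu>) = restr A B (restr_edge A B g e) \<mu>"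

fun is_path :: "nat \<Rightarrow> (nat \<Rightarrow> nat \<Rightarrow> nat) \<Rightarrow> nat \<Rightarrow> edge list \<Rightarrow> bool" where
  "is_path N A i [] = (i < N)"
| "is_path N A i (e # \<mu>) = (i < N \<and> e \<in> edges N A \<and> er e = i \<and> is_path N A (es e) \<mu>)"

text \<open>An element a_i^k is the unit of G_B (at i) iff it acts trivially.\<close>
definition trivial_elt :: "nat \<Rightarrow> (nat \<Rightarrow> nat \<Rightarrow> nat) \<Rightarrow> (nat \<Rightarrow> nat \<Rightarrow> int) \<Rightarrow> grp \<Rightarrow> bool" where
  "trivial_elt N A B g \<longleftrightarrow> (\<forall>\<mu>. is_path N A (fst g) \<mu> \<longrightarrow> act A B g \<mu> = \<mu>)"

definition regular :: "nat \<Rightarrow> (nat \<Rightarrow> nat \<Rightarrow> nat) \<Rightarrow> (nat \<Rightarrow> nat \<Rightarrow> int) \<Rightarrow> bool" where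
  "regular N A B \<longleftrightarrow> (\<forall>i<N. \<forall>k. \<exists>K::nat. \<forall>\<mu>.
      is_path N A i \<mu> \<and> act A B (i,k) \<mu> = \<mu> \<and> K \<le> length \<mu>
        \<longrightarrow> trivial_elt N A B (restr A B (i,k) \<mu>))"

text \<open>Left-infinite paths: x n represents mu_{-(n+1)}, so s(mu_{-(n+2)}) = r(mu_{-(n+1)}).\<close>
definition EAinf :: "nat \<Rightarrow> (nat \<Rightarrow> nat \<Rightarrow> nat) \<Rightarrow> (nat \<Rightarrow> edge) set" where
  "EAinf N A = {x. \<forall>n. x n \<in> edges N A \<and> es (x (Suc n)) = er (x n)}"

definition EAtop :: "nat \<Rightarrow> (nat \<Rightarrow> nat \<Rightarrow> nat) \<Rightarrow> (nat \<Rightarrow> edge) topology" where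
  "EAtop N A = subtopology (product_topology (\<lambda>_. discrete_topology (edges N A)) UNIV) (EAinf N A)"

definition shift :: "(nat \<Rightarrow> 'a) \<Rightarrow> (nat \<Rightarrow> 'a)" where
  "shift x = (\<lambda>n. x (Suc n))"

text \<open>finpref x n = mu_{-(n+1)} ... mu_{-1}\<close>
definition finpref :: "(nat \<Rightarrow> 'a) \<Rightarrow> nat \<Rightarrow> 'a list" where
  "finpref x n = rev (map x [0..<Suc n])"

definition ae_rel :: "nat \<Rightarrow> (nat \<Rightarrow> nat \<Rightarrow> nat) \<Rightarrow> (nat \<Rightarrow> nat \<Rightarrow> int) \<Rightarrow> (nat \<Rightarrow> edge) \<Rightarrow> (nat \<Rightarrow> edge) \<Rightarrow> bool" where
  "ae_rel N A B x y \<longleftrightarrow> x \<in> EAinf N A \<and> y \<in> EAinf N A \<and>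
     (\<exists>F::grp set. finite F \<and> (\<exists>gs. \<forall>n. gs n \<in> F \<and> fst (gs n) = er (x n)
         \<and> act A B (gs n) (finpref x n) = finpref y n))"

definition quotient_topology :: "'a topology \<Rightarrow> ('a \<Rightarrow> 'b) \<Rightarrow> 'b topology" where
  "quotient_topology X f = topology (\<lambda>U. U \<subseteq> f ` topspace X \<and> openin X {x \<in> topspace X. f x \<in> U})"

definition aeclass :: "nat \<Rightarrow> (nat \<Rightarrow> nat \<Rightarrow> nat) \<Rightarrow> (nat \<Rightarrow> nat \<Rightarrow> int) \<Rightarrow> (nat \<Rightarrow> edge) \<Rightarrow> (nat \<Rightarrow> edge) set" where
  "aeclass N A B x = {y. ae_rel N A B x y}"

definition limit_space :: "nat \<Rightarrow> (nat \<Rightarrow> nat \<Rightarrow> nat) \<Rightarrow> (nat \<Rightarrow> nat \<Rightarrow> int) \<Rightarrow> (nat \<Rightarrow> edge) set topology" where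
  "limit_space N A B = quotient_topology (EAtop N A) (aeclass N A B)"

definition sigJ :: "nat \<Rightarrow> (nat \<Rightarrow> nat \<Rightarrow> nat) \<Rightarrow> (nat \<Rightarrow> nat \<Rightarrow> int) \<Rightarrow> (nat \<Rightarrow> edge) set \<Rightarrow> (nat \<Rightarrow> edge) set" where
  "sigJ N A B c = aeclass N A B (shift (SOME x. x \<in> c))"

text \<open>Connectivity graph E_C: an edge is the pair (range, source).\<close>
definition ECinf :: "nat \<Rightarrow> (nat \<Rightarrow> nat \<Rightarrow> nat) \<Rightarrow> (nat \<Rightarrow> nat \<times> nat) set" where
  "ECinf N A = {v. \<forall>n. fst (v n) < N \<and> snd (v n) < N \<and> A (fst (v n)) (snd (v n)) > 0
                    \<and> snd (v (Suc n)) = fst (v n)}"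

definition piE :: "(nat \<Rightarrow> edge) \<Rightarrow> (nat \<Rightarrow> nat \<times> nat)" where
  "piE x = (\<lambda>n. (er (x n), es (x n)))"

definition piJ :: "(nat \<Rightarrow> edge) set \<Rightarrow> (nat \<Rightarrow> nat \<times> nat)" where
  "piJ c = piE (SOME x. x \<in> c)"

definition fibreJ :: "nat \<Rightarrow> (nat \<Rightarrow> nat \<Rightarrow> nat) \<Rightarrow> (nat \<Rightarrow> nat \<Rightarrow> int) \<Rightarrow> (nat \<Rightarrow> nat \<times> nat) \<Rightarrow> (nat \<Rightarrow> edge) set topology" where
  "fibreJ N A B v = subtopology (limit_space N A B) {c \<in> topspace (limit_space N A B). piJ c = v}"

definition fibreE :: "nat \<Rightarrow> (nat \<Rightarrow> nat \<Rightarrow> nat) \<Rightarrow> (nat \<Rightarrow> nat \<times> nat) \<Rightarrow> (nat \<Rightarrow> edge) topology" where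
  "fibreE N A v = subtopology (EAtop N A) {x \<in> EAinf N A. piE x = v}"

text \<open>K(v) = - min {k<0 : B_{v_{k-1},v_k} = 0}; the edge f_k = v (-k-1) has range v_{k-1}, source v_k.\<close>
definition Kv :: "(nat \<Rightarrow> nat \<Rightarrow> int) \<Rightarrow> (nat \<Rightarrow> nat \<times> nat) \<Rightarrow> enat" where
  "Kv B v = (let Z = {n. B (fst (v n)) (snd (v n)) = 0} in
     if finite Z then (if Z = {} then 0 else enat (Suc (Max Z))) else \<infinity>)"

definition supA :: "(nat \<Rightarrow> nat \<Rightarrow> nat) \<Rightarrow> (nat \<Rightarrow> nat \<times> nat) \<Rightarrow> enat" where
  "supA A v = (SUP m. enat (\<Prod>n<Suc m. A (fst (v n)) (snd (v n))))"

definition Pv :: "nat \<Rightarrow> (nat \<Rightarrow> nat \<Rightarrow> nat) \<Rightarrow> nat \<Rightarrow> (nat \<Rightarrow> nat \<times> nat) \<Rightarrow> edge list set" where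
  "Pv N A K v = {\<mu>. length \<mu> = K \<and> set \<mu> \<subseteq> edges N A \<and>
                    map (\<lambda>e. (er e, es e)) \<mu> = rev (map v [0..<K])}"

end

theory Submission
  imports Defs
begin


definition dig :: "edge \<Rightarrow> int" where "dig e = int (snd (snd e))"
definition ij :: "edge \<Rightarrow> nat \<times> nat" where "ij e = (er e, es e)"

fun val :: "(nat \<Rightarrow> nat \<Rightarrow> nat) \<Rightarrow> edge list \<Rightarrow> int" where
  "val A [] = 0"
| "val A (e # l) = dig e + int (A (er e) (es e)) * val A l"

fun pA :: "(nat \<Rightarrow> nat \<Rightarrow> nat) \<Rightarrow> edge list \<Rightarrow> nat" where
  "pA A [] = 1"
| "pA A (e # l) = A (er e) (es e) * pA A l"

lemma edges_iff: "(a,b,m) \<in> edges N A \<longleftrightarrow> a < N \<and> b < N \<and> m < A a b"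
  by (simp add: edges_def)

lemma edge_pos: "e \<in> edges N A \<Longrightarrow> 0 < A (er e) (es e)"
  by (cases e) (auto simp: edges_def er_def es_def)

lemma act_edge_simp: "act_edge A B g (a,b,m) = (a, b, nat ((snd g * B a b + int m) mod int (A a b)))"
  by (simp add: act_edge_def)

lemma restr_edge_simp: "restr_edge A B g (a,b,m) = (b, (snd g * B a b + int m) div int (A a b))"
  by (simp add: restr_edge_def)

lemma act_length[simp]: "length (act A B g l) = length l"
  by (induction l arbitrary: g) auto

lemma act_ij: "map ij (act A B g l) = map ij l"
  by (induction l arbitrary: g) (auto simp: act_edge_def ij_def er_def es_def split: prod.splits)

lemma act_fst: "act A B (i,k) l = act A B (j,k) l"
  by (induction l arbitrary: i j k) (auto simp: act_edge_def restr_edge_def split: prod.splits)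

lemma act_edges: "set l \<subseteq> edges N A \<Longrightarrow> set (act A B g l) \<subseteq> edges N A"
proof (induction l arbitrary: g)
  case Nil then show ?case by simp
next
  case (Cons e l)
  obtain a b m where e: "e = (a,b,m)" by (cases e)
  have "m < A a b" "a < N" "b < N" using Cons.prems e by (auto simp: edges_def)
  then have "nat ((snd g * B a b + int m) mod int (A a b)) < A a b"
    by (simp add: nat_less_iff)
  then show ?case using Cons \<open>a < N\<close> \<open>b < N\<close> e by (auto simp: act_edge_def edges_def)
qed

lemma act_append: "act A B g (l1 @ l2) = act A B g l1 @ act A B (restr A B g l1) l2"
  by (induction l1 arbitrary: g) auto

lemma act_zero: "set l \<subseteq> edges N A \<Longrightarrow> act A B (i,0) l = l"
proof (induction l arbitrary: i)
  case Nil then show ?case by simp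
next
  case (Cons e l)
  obtain a b m where e: "e = (a,b,m)" by (cases e)
  have "m < A a b" using Cons.prems e by (auto simp: edges_def)
  then show ?case using Cons e by (auto simp: act_edge_def restr_edge_def)
qed

lemma act_Bzero: "set (e # l) \<subseteq> edges N A \<Longrightarrow> B (er e) (es e) = 0 \<Longrightarrow> act A B g (e # l) = e # l"
proof -
  assume a1: "set (e # l) \<subseteq> edges N A" and a2: "B (er e) (es e) = 0"
  obtain a b m where e: "e = (a,b,m)" by (cases e)
  have "m < A a b" using a1 e by (auto simp: edges_def)
  then have "act_edge A B g e = e" "restr_edge A B g e = (b, 0)"
    using a2 e by (auto simp: act_edge_def restr_edge_def er_def es_def)
  then show ?thesis using act_zero[of l N A B b] a1 by simp
qed

lemma act_add: "set l \<subseteq> edges N A \<Longrightarrow> act A B (j,k2) (act A B (i,k1) l) = act A B (i, k1 + k2) l"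
proof (induction l arbitrary: i j k1 k2)
  case Nil then show ?case by simp
next
  case (Cons e l)
  obtain a b m where e: "e = (a,b,m)" by (cases e)
  have mA: "m < A a b" using Cons.prems e by (auto simp: edges_def)
  define Ai where "Ai = int (A a b)"
  have Ai: "Ai > 0" using mA Ai_def by simp
  define x where "x = k1 * B a b + int m"
  have x0: "0 \<le> x mod Ai" using Ai by simp
  have e1: "(k2 * B a b + x mod Ai) mod Ai = ((k1 + k2) * B a b + int m) mod Ai"
    by (simp add: x_def mod_add_right_eq algebra_simps)
  have md: "x mod Ai + x div Ai * Ai = x" by (rule mod_div_mult_eq)
  have e3: "(k1 + k2) * B a b + int m = (k2 * B a b + x mod Ai) + (x div Ai) * Ai"
    using md unfolding x_def by (simp add: algebra_simps)
  have e2: "((k1 + k2) * B a b + int m) div Ai = x div Ai + (k2 * B a b + x mod Ai) div Ai"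
    unfolding e3 using Ai by (subst div_mult_self1) auto
  have IH: "act A B (b, (k2 * B a b + x mod Ai) div Ai) (act A B (b, x div Ai) l) = act A B (b, x div Ai + (k2 * B a b + x mod Ai) div Ai) l"
    using Cons.IH Cons.prems by simp
  show ?case using IH Cons.prems e x0
    by (simp add: act_edge_def restr_edge_def e1 e2 x_def[symmetric] Ai_def[symmetric] act_fst[of A B _ _ l])
qed

lemma val_append: "val A (l1 @ l2) = val A l1 + int (pA A l1) * val A l2"
  by (induction l1) (auto simp: algebra_simps)

lemma pA_append: "pA A (l1 @ l2) = pA A l1 * pA A l2"
  by (induction l1) auto

lemma pA_pos: "set l \<subseteq> edges N A \<Longrightarrow> 0 < pA A l"
  by (induction l) (auto dest: edge_pos)

lemma val_bounds: "set l \<subseteq> edges N A \<Longrightarrow> 0 \<le> val A l \<and> val A l < int (pA A l)"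
proof (induction l)
  case Nil then show ?case by simp
next
  case (Cons e l)
  obtain a b m where e: "e = (a,b,m)" by (cases e)
  have mA: "m < A a b" using Cons.prems e by (auto simp: edges_def)
  have IH: "0 \<le> val A l" "val A l \<le> int (pA A l) - 1" using Cons by auto
  have "int (A a b) * val A l \<le> int (A a b) * (int (pA A l) - 1)"
    using IH by (simp add: mult_left_mono)
  then show ?case using IH mA e by (auto simp: dig_def er_def es_def algebra_simps)
qed

lemma val_inj: "set l1 \<subseteq> edges N A \<Longrightarrow> set l2 \<subseteq> edges N A \<Longrightarrow> map ij l1 = map ij l2 \<Longrightarrow>
   val A l1 = val A l2 \<Longrightarrow> l1 = l2"
proof (induction l1 arbitrary: l2)
  case Nil then show ?case by simp
next
  case (Cons e l1)
  then obtain e2 l2' where l2: "l2 = e2 # l2'" by (cases l2) auto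
  obtain a b m where e: "e = (a,b,m)" by (cases e)
  obtain a2 b2 m2 where e2: "e2 = (a2,b2,m2)" by (cases e2)
  have same: "a2 = a" "b2 = b" using Cons.prems l2 e e2 by (auto simp: ij_def er_def es_def)
  have mA: "m < A a b" "m2 < A a b" using Cons.prems e e2 l2 same by (auto simp: edges_def)
  have eq: "int m + int (A a b) * val A l1 = int m2 + int (A a b) * val A l2'"
    using Cons.prems l2 e e2 same by (auto simp: dig_def er_def es_def)
  have "(int m + int (A a b) * val A l1) mod int (A a b) = int m"
    using mA by simp
  moreover have "(int m2 + int (A a b) * val A l2') mod int (A a b) = int m2"
    using mA by simp
  ultimately have mm: "m = m2" using eq by simp
  then have "val A l1 = val A l2'" using eq mA by simp
  then have "l1 = l2'" using Cons l2 by auto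
  then show ?case using l2 e e2 same mm by simp
qed

definition allB1 :: "(nat \<Rightarrow> nat \<Rightarrow> int) \<Rightarrow> edge list \<Rightarrow> bool" where
  "allB1 B l \<longleftrightarrow> (\<forall>e\<in>set l. B (er e) (es e) = 1)"

lemma act_val: "set l \<subseteq> edges N A \<Longrightarrow> allB1 B l \<Longrightarrow>
   val A (act A B (i,k) l) = (k + val A l) mod int (pA A l)"
proof (induction l arbitrary: i k)
  case Nil then show ?case by simp
next
  case (Cons e l)
  obtain a b m where e: "e = (a,b,m)" by (cases e)
  have mA: "m < A a b" using Cons.prems e by (auto simp: edges_def)
  have B1: "B a b = 1" using Cons.prems e by (auto simp: allB1_def er_def es_def)
  define Ai where "Ai = int (A a b)"
  have Ai: "Ai > 0" using mA Ai_def by simp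
  define P where "P = int (pA A l)"
  define x where "x = k + int m + Ai * val A l"
  have xd: "x div Ai = (k + int m) div Ai + val A l"
    using Ai by (simp add: x_def)
  have xm: "x mod Ai = (k + int m) mod Ai"
    by (simp add: x_def)
  have "x mod (Ai * P) = Ai * (x div Ai mod P) + x mod Ai"
    unfolding Ai_def P_def by (rule mod_mult2_eq')
  then have "x mod (Ai * P) = Ai * (((k + int m) div Ai + val A l) mod P) + (k + int m) mod Ai"
    by (simp only: xd xm)
  then have key: "(k + int m + Ai * val A l) mod (Ai * P) = (k + int m) mod Ai + Ai * (((k + int m) div Ai + val A l) mod P)"
    by (simp only: x_def add.commute)
  have IH: "val A (act A B (b, (k + int m) div Ai) l) = ((k + int m) div Ai + val A l) mod P"
    using Cons P_def by (auto simp: allB1_def)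
  show ?case using key IH e B1 Ai
    by (simp add: act_edge_def restr_edge_def dig_def er_def es_def Ai_def[symmetric] P_def[symmetric] algebra_simps)
qed


lemma finpref_0[simp]: "finpref x 0 = [x 0]"
  by (simp add: finpref_def)

lemma finpref_Suc: "finpref x (Suc n) = x (Suc n) # finpref x n"
  by (simp add: finpref_def)

lemma length_finpref[simp]: "length (finpref x n) = Suc n"
  by (simp add: finpref_def)

lemma set_finpref: "set (finpref x n) = x ` {..n}"
  by (auto simp: finpref_def image_iff less_Suc_eq_le simp del: upt_Suc)

lemma finpref_split: "finpref x (n + K) = finpref (\<lambda>j. x (j + K)) n @ rev (map x [0..<K])"
proof (induction n)
  case 0 then show ?case by (simp add: finpref_def)
next
  case (Suc n) then show ?case by (simp add: finpref_Suc)
qed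

lemma finpref_shift: "finpref x (Suc n) = finpref (shift x) n @ [x 0]"
  using finpref_split[of x n 1] by (simp add: shift_def)

lemma finpref_eq_iff: "finpref x n = finpref y n \<longleftrightarrow> (\<forall>j\<le>n. x j = y j)"
proof -
  have "finpref x n = finpref y n \<longleftrightarrow> map x [0..<Suc n] = map y [0..<Suc n]"
    by (simp add: finpref_def del: upt_Suc)
  also have "\<dots> \<longleftrightarrow> (\<forall>j\<le>n. x j = y j)"
    by (auto simp: map_eq_conv less_Suc_eq_le simp del: upt_Suc)
  finally show ?thesis .
qed

lemma shift_pow: "(shift ^^ K) x = (\<lambda>j. x (j + K))"
  by (induction K arbitrary: x) (auto simp: shift_def)

lemma EAinf_edge: "x \<in> EAinf N A \<Longrightarrow> x n \<in> edges N A"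
  by (simp add: EAinf_def)

lemma EAinf_conn: "x \<in> EAinf N A \<Longrightarrow> es (x (Suc n)) = er (x n)"
  by (simp add: EAinf_def)

lemma EAinf_finpref: "x \<in> EAinf N A \<Longrightarrow> set (finpref x n) \<subseteq> edges N A"
  by (auto simp: set_finpref EAinf_def)

lemma EAinf_shift: "x \<in> EAinf N A \<Longrightarrow> shift x \<in> EAinf N A"
  by (simp add: EAinf_def shift_def)

lemma EAinf_shift_pow: "x \<in> EAinf N A \<Longrightarrow> (shift ^^ K) x \<in> EAinf N A"
  by (induction K) (auto simp: EAinf_shift)

lemma ae_bounded: "ae_rel N A B x y \<longleftrightarrow> x \<in> EAinf N A \<and> y \<in> EAinf N A \<and>
   (\<exists>M ks. \<forall>n. \<bar>ks n\<bar> \<le> M \<and> act A B (0, ks n) (finpref x n) = finpref y n)"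
proof
  assume "ae_rel N A B x y"
  then obtain F gs where x: "x \<in> EAinf N A" and y: "y \<in> EAinf N A" and F: "finite F"
    and gs: "\<And>n. gs n \<in> F \<and> fst (gs n) = er (x n) \<and> act A B (gs n) (finpref x n) = finpref y n"
    unfolding ae_rel_def by blast
  define M where "M = Max ((\<lambda>g. \<bar>snd g\<bar>) ` F)"
  have "\<bar>snd (gs n)\<bar> \<le> M" for n
    unfolding M_def using F gs[of n] by (intro Max_ge) auto
  moreover have "act A B (0, snd (gs n)) (finpref x n) = finpref y n" for n
    using gs[of n] act_fst[of A B "fst (gs n)" "snd (gs n)" _ 0] by (metis prod.collapse)
  ultimately show "x \<in> EAinf N A \<and> y \<in> EAinf N A \<and>
   (\<exists>M ks. \<forall>n. \<bar>ks n\<bar> \<le> M \<and> act A B (0, ks n) (finpref x n) = finpref y n)"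
    using x y by (intro conjI exI[of _ M] exI[of _ "\<lambda>n. snd (gs n)"]) auto
next
  assume "x \<in> EAinf N A \<and> y \<in> EAinf N A \<and>
   (\<exists>M ks. \<forall>n. \<bar>ks n\<bar> \<le> M \<and> act A B (0, ks n) (finpref x n) = finpref y n)"
  then obtain M ks where x: "x \<in> EAinf N A" and y: "y \<in> EAinf N A"
    and ks: "\<And>n. \<bar>ks n\<bar> \<le> M \<and> act A B (0, ks n) (finpref x n) = finpref y n" by blast
  define F where "F = {..<N} \<times> {-M..M}"
  have "finite F" by (simp add: F_def)
  moreover have "(er (x n), ks n) \<in> F \<and> fst (er (x n), ks n) = er (x n) \<and>
       act A B (er (x n), ks n) (finpref x n) = finpref y n" for n
  proof -
    have "x n \<in> edges N A" using x by (rule EAinf_edge)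
    then have "er (x n) < N" by (auto simp: edges_def er_def)
    then show ?thesis using ks[of n] act_fst[of A B 0 "ks n" _ "er (x n)"] by (auto simp: F_def)
  qed
  ultimately show "ae_rel N A B x y" unfolding ae_rel_def using x y
    by (intro conjI exI[of _ F] exI[of _ "\<lambda>n. (er (x n), ks n)"]) auto
qed

lemma ae_refl: "x \<in> EAinf N A \<Longrightarrow> ae_rel N A B x x"
  unfolding ae_bounded
  by (rule conjI, assumption, rule conjI, assumption, rule exI[of _ 0], rule exI[of _ "\<lambda>_. 0"])
     (auto simp: act_zero[OF EAinf_finpref])

lemma ae_sym: "ae_rel N A B x y \<Longrightarrow> ae_rel N A B y x"
proof -
  assume "ae_rel N A B x y"
  then obtain M ks where x: "x \<in> EAinf N A" and y: "y \<in> EAinf N A"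
    and ks: "\<And>n. \<bar>ks n\<bar> \<le> M \<and> act A B (0, ks n) (finpref x n) = finpref y n"
    unfolding ae_bounded by blast
  have "act A B (0, - ks n) (finpref y n) = finpref x n" for n
  proof -
    have "act A B (0, - ks n) (finpref y n) = act A B (0, - ks n) (act A B (0, ks n) (finpref x n))"
      using ks by simp
    also have "\<dots> = act A B (0, 0) (finpref x n)"
      using act_add[OF EAinf_finpref[OF x]] by simp
    also have "\<dots> = finpref x n" using act_zero[OF EAinf_finpref[OF x]] by simp
    finally show ?thesis .
  qed
  then show ?thesis unfolding ae_bounded using x y ks by (intro conjI exI[of _ M] exI[of _ "\<lambda>n. - ks n"]) auto
qed

lemma ae_trans: "ae_rel N A B x y \<Longrightarrow> ae_rel N A B y z \<Longrightarrow> ae_rel N A B x z"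
proof -
  assume "ae_rel N A B x y" "ae_rel N A B y z"
  then obtain M ks M2 ks2 where x: "x \<in> EAinf N A" and z: "z \<in> EAinf N A"
    and ks: "\<And>n. \<bar>ks n\<bar> \<le> M \<and> act A B (0, ks n) (finpref x n) = finpref y n"
    and ks2: "\<And>n. \<bar>ks2 n\<bar> \<le> M2 \<and> act A B (0, ks2 n) (finpref y n) = finpref z n"
    unfolding ae_bounded by blast
  have "act A B (0, ks n + ks2 n) (finpref x n) = finpref z n" for n
  proof -
    have "finpref z n = act A B (0, ks2 n) (act A B (0, ks n) (finpref x n))" using ks ks2 by simp
    then show ?thesis using act_add[OF EAinf_finpref[OF x]] by simp
  qed
  moreover have "\<bar>ks n + ks2 n\<bar> \<le> M + M2" for n using ks[of n] ks2[of n] by linarith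
  ultimately show ?thesis unfolding ae_bounded using x z
    by (intro conjI exI[of _ "M + M2"] exI[of _ "\<lambda>n. ks n + ks2 n"]) auto
qed

lemma ae_EAinf: "ae_rel N A B x y \<Longrightarrow> x \<in> EAinf N A \<and> y \<in> EAinf N A"
  by (simp add: ae_rel_def)

lemma ae_piE: "ae_rel N A B x y \<Longrightarrow> piE x = piE y"
proof -
  assume "ae_rel N A B x y"
  then obtain M ks where ks: "\<And>n. act A B (0, ks n) (finpref x n) = finpref y n"
    unfolding ae_bounded by blast
  have "ij (x n) = ij (y n)" for n
  proof -
    have "map ij (finpref y n) = map ij (finpref x n)"
      using act_ij[of A B "(0, ks n)" "finpref x n"] ks[of n] by simp
    then show ?thesis by (cases n) (auto simp: finpref_Suc)
  qed
  then show ?thesis by (auto simp: piE_def ij_def)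
qed

lemma ae_shift: "ae_rel N A B x y \<Longrightarrow> ae_rel N A B (shift x) (shift y)"
proof -
  assume "ae_rel N A B x y"
  then obtain M ks where x: "x \<in> EAinf N A" and y: "y \<in> EAinf N A"
    and ks: "\<And>n. \<bar>ks n\<bar> \<le> M \<and> act A B (0, ks n) (finpref x n) = finpref y n"
    unfolding ae_bounded by blast
  have "act A B (0, ks (Suc n)) (finpref (shift x) n) = finpref (shift y) n" for n
  proof -
    have "act A B (0, ks (Suc n)) (finpref (shift x) n) @ act A B (restr A B (0, ks (Suc n)) (finpref (shift x) n)) [x 0]
          = finpref (shift y) n @ [y 0]"
      using ks[of "Suc n"] by (simp add: finpref_shift act_append)
    then show ?thesis by simp
  qed
  then show ?thesis unfolding ae_bounded using x y ks
    by (intro conjI exI[of _ M] exI[of _ "\<lambda>n. ks (Suc n)"]) (auto simp: EAinf_shift)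
qed

lemma ae_shift_pow: "ae_rel N A B x y \<Longrightarrow> ae_rel N A B ((shift ^^ K) x) ((shift ^^ K) y)"
  by (induction K) (auto intro: ae_shift)

lemma ae_zeroB: "ae_rel N A B x y \<Longrightarrow> B (er (x k)) (es (x k)) = 0 \<Longrightarrow> \<forall>j\<le>k. x j = y j"
proof -
  assume a: "ae_rel N A B x y" and b: "B (er (x k)) (es (x k)) = 0"
  then obtain M ks where x: "x \<in> EAinf N A"
    and ks: "\<And>n. act A B (0, ks n) (finpref x n) = finpref y n"
    unfolding ae_bounded by blast
  have "finpref x k = x k # (if k = 0 then [] else finpref x (k - 1))"
    by (cases k) (auto simp: finpref_Suc)
  then have "act A B (0, ks k) (finpref x k) = finpref x k"
    using act_Bzero[of "x k" _ N A B] EAinf_finpref[OF x, of k] b by metis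
  then have "finpref x k = finpref y k" using ks by simp
  then show ?thesis by (simp add: finpref_eq_iff)
qed

lemma ae_extend:
  assumes x: "x \<in> EAinf N A" and y: "y \<in> EAinf N A" and K: "0 < K"
    and b: "B (er (x (K - 1))) (es (x (K - 1))) = 0" and eq: "\<forall>j<K. x j = y j"
    and ae: "ae_rel N A B ((shift ^^ K) x) ((shift ^^ K) y)"
  shows "ae_rel N A B x y"
proof -
  obtain M ks where ks: "\<And>n. \<bar>ks n\<bar> \<le> M \<and> act A B (0, ks n) (finpref ((shift ^^ K) x) n) = finpref ((shift ^^ K) y) n"
    using ae unfolding ae_bounded by blast
  define ks' where "ks' n = (if n < K then 0 else ks (n - K))" for n
  have tl: "rev (map x [0..<K]) = rev (map y [0..<K])"
    using eq by (simp add: map_eq_conv)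
  have tl2: "act A B g (rev (map x [0..<K])) = rev (map x [0..<K])" for g
  proof -
    obtain K' where K': "K = Suc K'" using K by (cases K) auto
    have "rev (map x [0..<K]) = x K' # rev (map x [0..<K'])" using K' by simp
    moreover have "set (rev (map x [0..<K])) \<subseteq> edges N A" using x by (auto intro: EAinf_edge)
    ultimately show ?thesis using act_Bzero[of "x K'" "rev (map x [0..<K'])" N A B g] b K' by simp
  qed
  have "\<bar>ks' n\<bar> \<le> max M 0 \<and> act A B (0, ks' n) (finpref x n) = finpref y n" for n
  proof (cases "n < K")
    case True
    then have "finpref x n = finpref y n" using eq by (simp add: finpref_eq_iff)
    then show ?thesis using True act_zero[OF EAinf_finpref[OF x, of n]] by (simp add: ks'_def)
  next
    case False
    then obtain n' where n: "n = n' + K" by (metis add.commute le_Suc_ex not_less)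
    have "act A B (0, ks n') (finpref x n) = finpref y n"
      using ks[of n'] tl tl2 by (simp add: n finpref_split act_append shift_pow)
    then show ?thesis using ks[of n'] by (simp add: ks'_def n le_max_iff_disj)
  qed
  then show ?thesis unfolding ae_bounded using x y
    by (intro conjI exI[of _ "max M 0"] exI[of _ ks']) auto
qed

definition rep :: "'a set \<Rightarrow> 'a" where "rep c = (SOME x. x \<in> c)"

lemma aeclass_mem: "x \<in> EAinf N A \<Longrightarrow> x \<in> aeclass N A B x"
  by (simp add: aeclass_def ae_refl)

lemma aeclass_eq: "x \<in> EAinf N A \<Longrightarrow> aeclass N A B x = aeclass N A B y \<longleftrightarrow> ae_rel N A B x y"
proof
  assume x: "x \<in> EAinf N A" and e: "aeclass N A B x = aeclass N A B y"
  have "x \<in> aeclass N A B y" using aeclass_mem[OF x, of B] e by simp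
  then show "ae_rel N A B x y" by (simp add: aeclass_def ae_sym)
next
  assume "ae_rel N A B x y"
  then have "ae_rel N A B x z \<longleftrightarrow> ae_rel N A B y z" for z
    using ae_sym ae_trans by metis
  then show "aeclass N A B x = aeclass N A B y" by (simp add: aeclass_def)
qed

lemma rep_aeclass:
  assumes "x \<in> EAinf N A"
  shows "ae_rel N A B x (rep (aeclass N A B x))" "aeclass N A B (rep (aeclass N A B x)) = aeclass N A B x"
    "rep (aeclass N A B x) \<in> EAinf N A"
proof -
  have "rep (aeclass N A B x) \<in> aeclass N A B x"
    unfolding rep_def by (rule someI[where x=x]) (rule aeclass_mem[OF assms])
  then show 1: "ae_rel N A B x (rep (aeclass N A B x))" by (simp add: aeclass_def)
  show 3: "rep (aeclass N A B x) \<in> EAinf N A" using 1 ae_EAinf by blast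
  show "aeclass N A B (rep (aeclass N A B x)) = aeclass N A B x"
    using aeclass_eq[OF 3] ae_sym[OF 1] by blast
qed

lemma piJ_rep: "piJ c = piE (rep c)"
  by (simp add: piJ_def rep_def)

lemma piJ_aeclass: "x \<in> EAinf N A \<Longrightarrow> piJ (aeclass N A B x) = piE x"
  using ae_piE[OF rep_aeclass(1)] by (simp add: piJ_rep)

lemma sigJ_rep: "sigJ N A B c = aeclass N A B (shift (rep c))"
  by (simp add: sigJ_def rep_def)


definition tt :: "(nat \<Rightarrow> nat \<Rightarrow> nat) \<Rightarrow> (nat \<Rightarrow> edge) \<Rightarrow> real" where
  "tt A x = (\<Sum>j. real_of_int (dig (x j)) / real (pA A (finpref x j)))"

lemma pA_finpref: "pA A (finpref x n) = (\<Prod>i<Suc n. A (er (x i)) (es (x i)))"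
  by (induction n) (auto simp: finpref_Suc)

lemma pA_finpref_piE: "piE x = piE y \<Longrightarrow> pA A (finpref x n) = pA A (finpref y n)"
  unfolding pA_finpref by (metis (no_types, lifting) fst_conv piE_def snd_conv)

lemma ij_finpref_piE: "piE x = piE y \<Longrightarrow> map ij (finpref x n) = map ij (finpref y n)"
proof -
  assume "piE x = piE y"
  then have "ij \<circ> x = ij \<circ> y" by (auto simp: piE_def ij_def fun_eq_iff)
  then show ?thesis unfolding finpref_def rev_map map_map by simp
qed

lemma pA_finpref_pos: "x \<in> EAinf N A \<Longrightarrow> 0 < pA A (finpref x n)"
  using pA_pos[OF EAinf_finpref] by blast

lemma partial_sum:
  assumes x: "x \<in> EAinf N A"
  shows "(\<Sum>j<Suc n. real_of_int (dig (x j)) / real (pA A (finpref x j)))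
         = real_of_int (val A (finpref x n)) / real (pA A (finpref x n))"
proof (induction n)
  case 0 then show ?case by simp
next
  case (Suc n)
  have a: "0 < A (er (x (Suc n))) (es (x (Suc n)))" using edge_pos[OF EAinf_edge[OF x]] .
  have p: "0 < pA A (finpref x n)" using pA_finpref_pos[OF x] .
  show ?case using Suc a p
    by (simp add: finpref_Suc field_simps)
qed

lemma partial_bound:
  assumes x: "x \<in> EAinf N A"
  shows "0 \<le> real_of_int (val A (finpref x n)) / real (pA A (finpref x n))"
    "real_of_int (val A (finpref x n)) / real (pA A (finpref x n)) < 1"
  using val_bounds[OF EAinf_finpref[OF x, of n]] pA_finpref_pos[OF x, of n]
  by (auto simp: divide_less_eq)

lemma summable_tt:
  assumes x: "x \<in> EAinf N A"
  shows "summable (\<lambda>j. real_of_int (dig (x j)) / real (pA A (finpref x j)))"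
proof (rule bounded_imp_summable)
  fix n show "0 \<le> real_of_int (dig (x n)) / real (pA A (finpref x n))"
    by (simp add: dig_def)
  show "(\<Sum>k\<le>n. real_of_int (dig (x k)) / real (pA A (finpref x k))) \<le> 1"
    using partial_sum[OF x, of n] partial_bound[OF x, of n] lessThan_Suc_atMost by auto
qed

abbreviation SS :: "(nat \<Rightarrow> nat \<Rightarrow> nat) \<Rightarrow> (nat \<Rightarrow> edge) \<Rightarrow> nat \<Rightarrow> real" where
  "SS A x n \<equiv> real_of_int (val A (finpref x n)) / real (pA A (finpref x n))"

lemma SS_lim:
  assumes x: "x \<in> EAinf N A"
  shows "(\<lambda>n. SS A x n) \<longlonglongrightarrow> tt A x"
proof -
  have "(\<lambda>n. (\<Sum>j<Suc n. real_of_int (dig (x j)) / real (pA A (finpref x j)))) \<longlonglongrightarrow> tt A x"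
    unfolding tt_def using LIMSEQ_Suc[OF summable_LIMSEQ[OF summable_tt[OF x]]] by simp
  then show ?thesis using partial_sum[OF x] by simp
qed

lemma SS_step:
  assumes x: "x \<in> EAinf N A" and mn: "n \<le> m"
  shows "SS A x n \<le> SS A x m \<and> SS A x m \<le> SS A x n + 1 / real (pA A (finpref x n))"
proof (cases "m = n")
  case True then show ?thesis using pA_finpref_pos[OF x, of n] by simp
next
  case False
  then have "n < m" using mn by simp
  then obtain k where m: "m = k + Suc n" using less_imp_Suc_add[of n m] by auto
  define l where "l = finpref (\<lambda>j. x (j + Suc n)) k"
  have fm: "finpref x m = l @ finpref x n"
    unfolding m l_def finpref_split by (simp add: finpref_def del: upt_Suc)
  have lE: "set l \<subseteq> edges N A" unfolding l_def set_finpref using x by (auto intro: EAinf_edge)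
  have vb: "0 \<le> val A l" "val A l < int (pA A l)" using val_bounds[OF lE] by auto
  have pl: "0 < pA A l" using pA_pos[OF lE] .
  have pn: "0 < pA A (finpref x n)" using pA_finpref_pos[OF x] .
  define L where "L = real (pA A l)"
  define Pn where "Pn = real (pA A (finpref x n))"
  define W where "W = real_of_int (val A l)"
  define V where "V = real_of_int (val A (finpref x n))"
  have L: "L > 0" "0 \<le> W" "W < L" using pl vb by (auto simp: L_def W_def)
  have P: "Pn > 0" using pn by (simp add: Pn_def)
  have eq: "SS A x m = W / (L * Pn) + V / Pn"
    using L P by (simp add: fm val_append pA_append L_def Pn_def W_def V_def field_simps)
  have "W / (L * Pn) < 1 / Pn" using L P by (simp add: field_simps)
  moreover have "0 \<le> W / (L * Pn)" using L P by simp
  ultimately show ?thesis using eq by (simp add: V_def Pn_def)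
qed

lemma tt_bounds:
  assumes x: "x \<in> EAinf N A"
  shows "SS A x n \<le> tt A x" "tt A x \<le> SS A x n + 1 / real (pA A (finpref x n))"
proof -
  show "SS A x n \<le> tt A x"
    by (rule LIMSEQ_le_const[OF SS_lim[OF x]]) (use SS_step[OF x] in blast)
  show "tt A x \<le> SS A x n + 1 / real (pA A (finpref x n))"
    by (rule LIMSEQ_le_const2[OF SS_lim[OF x]]) (use SS_step[OF x] in blast)
qed

lemma tt_close:
  assumes x: "x \<in> EAinf N A" and y: "y \<in> EAinf N A" and e: "finpref x n = finpref y n"
  shows "\<bar>tt A x - tt A y\<bar> \<le> 1 / real (pA A (finpref x n))"
proof -
  have "SS A x n \<le> tt A x" "tt A x \<le> SS A x n + 1 / real (pA A (finpref x n))" by (rule tt_bounds[OF x])+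
  moreover have "SS A y n \<le> tt A y" "tt A y \<le> SS A y n + 1 / real (pA A (finpref y n))" by (rule tt_bounds[OF y])+
  ultimately show ?thesis using e by auto
qed

lemma zero_limit:
  fixes D C :: real and P :: "nat \<Rightarrow> nat"
  assumes unb: "\<And>M. \<exists>n. M < P n" and b: "\<And>n. \<bar>D\<bar> \<le> C / real (P n)" and pos: "\<And>n. 0 < P n"
  shows "D = 0"
proof (rule ccontr)
  assume "D \<noteq> 0"
  then have d: "\<bar>D\<bar> > 0" by simp
  obtain n where n: "nat \<lceil>\<bar>C\<bar> / \<bar>D\<bar>\<rceil> < P n" using unb by blast
  have "\<bar>C\<bar> / \<bar>D\<bar> < real (P n)" using n by linarith
  then have "\<bar>C\<bar> < real (P n) * \<bar>D\<bar>" using d by (simp add: divide_less_eq)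
  moreover have "\<bar>D\<bar> * real (P n) \<le> C" using b[of n] n
    by (simp add: le_divide_eq split: if_splits)
  ultimately show False by (simp add: algebra_simps)
qed

lemma int_limit:
  fixes D C :: real and P :: "nat \<Rightarrow> nat" and z :: "nat \<Rightarrow> int"
  assumes unb: "\<And>M. \<exists>n. M < P n" and b: "\<And>n. \<bar>D - real_of_int (z n)\<bar> \<le> C / real (P n)"
    and C: "0 \<le> C" and pos: "\<And>n. 0 < P n"
  shows "D \<in> \<int>"
proof -
  obtain n1 where n1: "nat \<lceil>4 * C\<rceil> < P n1" using unb by blast
  have p1: "4 * C < real (P n1)" using n1 by linarith
  have c1: "C / real (P n1) < 1/4" using p1 C by (simp add: divide_less_eq)
  have "\<bar>D - real_of_int (z n1)\<bar> = 0"
  proof (rule zero_limit[of P _ C])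
    show "\<exists>n. M < P n" for M using unb .
    show "0 < P n" for n using pos .
    fix n
    obtain m where m: "max (P n) (P n1) < P m" using unb by blast
    have pm: "real (P n) \<le> real (P m)" "real (P n1) \<le> real (P m)" "0 < real (P m)" "0 < real (P n1)" using m p1 C by auto
    have "C / real (P m) \<le> C / real (P n1)"
      using pm C by (intro divide_left_mono) auto
    then have q: "\<bar>D - real_of_int (z m)\<bar> < 1/4" using b[of m] c1 by linarith
    have "\<bar>real_of_int (z m) - real_of_int (z n1)\<bar> < 1" using q b[of n1] c1 by linarith
    then have "z m = z n1" by linarith
    moreover have "C / real (P m) \<le> C / real (P n)"
      using pm C pos[of n] by (intro divide_left_mono) auto
    ultimately show "\<bar>\<bar>D - real_of_int (z n1)\<bar>\<bar> \<le> C / real (P n)" using b[of m] by simp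
  qed
  then have "D = real_of_int (z n1)" by simp
  then show ?thesis by simp
qed


definition FE :: "nat \<Rightarrow> (nat \<Rightarrow> nat \<Rightarrow> nat) \<Rightarrow> (nat \<Rightarrow> nat \<times> nat) \<Rightarrow> (nat \<Rightarrow> edge) set" where
  "FE N A v = {x \<in> EAinf N A. piE x = v}"

abbreviation Bz :: "(nat \<Rightarrow> nat \<Rightarrow> int) \<Rightarrow> (nat \<Rightarrow> nat \<times> nat) \<Rightarrow> nat \<Rightarrow> bool" where
  "Bz B v n \<equiv> B (fst (v n)) (snd (v n)) = 0"

lemma Kv_0: "Kv B v = 0 \<longleftrightarrow> (\<forall>n. \<not> Bz B v n)"
  by (auto simp: Kv_def Let_def zero_enat_def)

lemma Kv_inf: "Kv B v = \<infinity> \<longleftrightarrow> infinite {n. Bz B v n}"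
  by (auto simp: Kv_def Let_def zero_enat_def)

lemma Kv_Suc: "Kv B v = enat (Suc k) \<longleftrightarrow> Bz B v k \<and> (\<forall>n>k. \<not> Bz B v n)"
proof
  assume a: "Kv B v = enat (Suc k)"
  let ?Z = "{n. Bz B v n}"
  have f: "finite ?Z" and ne: "?Z \<noteq> {}" and m: "Max ?Z = k"
    using a by (auto simp: Kv_def Let_def zero_enat_def split: if_splits)
  have "k \<in> ?Z" using Max_in[OF f ne] m by simp
  moreover have "\<not> Bz B v n" if "n > k" for n
    using Max_ge[OF f, of n] m that by auto
  ultimately show "Bz B v k \<and> (\<forall>n>k. \<not> Bz B v n)" by simp
next
  assume a: "Bz B v k \<and> (\<forall>n>k. \<not> Bz B v n)"
  let ?Z = "{n. Bz B v n}"
  have sub: "?Z \<subseteq> {..k}" using a by (auto simp: not_less[symmetric])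
  then have f: "finite ?Z" using finite_subset by blast
  have ne: "?Z \<noteq> {}" using a by auto
  have "Max ?Z = k" using a sub by (intro Max_eqI[OF f]) auto
  then show "Kv B v = enat (Suc k)" using f ne a by (auto simp: Kv_def Let_def)
qed

lemma Kv_cases: "Kv B v = 0 \<or> Kv B v = \<infinity> \<or> (\<exists>k. Kv B v = enat (Suc k))"
  by (auto simp: Kv_def Let_def zero_enat_def)

lemma Kv_shift_0: "Kv B v = 0 \<Longrightarrow> Kv B (shift v) = 0"
  by (simp add: Kv_0 shift_def)

lemma Kv_shift_inf: "Kv B v = \<infinity> \<Longrightarrow> Kv B (shift v) = \<infinity>"
proof -
  assume "Kv B v = \<infinity>"
  then have i: "infinite {n. Bz B v n}" by (simp add: Kv_inf)
  have "{n. Bz B v n} \<subseteq> insert 0 (Suc ` {n. Bz B (shift v) n})"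
  proof
    fix n assume n: "n \<in> {n. Bz B v n}"
    show "n \<in> insert 0 (Suc ` {n. Bz B (shift v) n})"
    proof (cases n)
      case 0 then show ?thesis by simp
    next
      case (Suc m)
      then have "Bz B (shift v) m" using n by (simp add: shift_def)
      then show ?thesis using Suc by blast
    qed
  qed
  then have "infinite {n. Bz B (shift v) n}" using i finite_subset by blast
  then show ?thesis by (simp add: Kv_inf)
qed

lemma Kv_shift_Suc: "Kv B v = enat (Suc (Suc k)) \<Longrightarrow> Kv B (shift v) = enat (Suc k)"
  by (simp add: Kv_Suc shift_def)

lemma Kv_shift_pow: "Kv B v = enat K \<Longrightarrow> Kv B ((shift ^^ K) v) = 0"
proof (cases K)
  case 0 then show "Kv B v = enat K \<Longrightarrow> ?thesis" by (simp add: zero_enat_def)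
next
  case (Suc k)
  assume "Kv B v = enat K"
  then have "\<forall>n>k. \<not> Bz B v n" using Suc Kv_Suc by blast
  then have "\<forall>n. \<not> Bz B v (n + K)" using Suc by simp
  then show ?thesis unfolding Kv_0 shift_pow by simp
qed

lemma ECinf_shift: "v \<in> ECinf N A \<Longrightarrow> shift v \<in> ECinf N A"
  unfolding ECinf_def shift_def by blast

lemma ECinf_shift_pow: "v \<in> ECinf N A \<Longrightarrow> (shift ^^ K) v \<in> ECinf N A"
  by (induction K) (auto simp: ECinf_shift)

lemma piE_shift: "piE (shift x) = shift (piE x)"
  by (simp add: piE_def shift_def)

lemma piE_shift_pow: "piE ((shift ^^ K) x) = (shift ^^ K) (piE x)"
  by (simp add: piE_def shift_pow)

definition x0 :: "(nat \<Rightarrow> nat \<times> nat) \<Rightarrow> nat \<Rightarrow> edge" where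
  "x0 v n = (fst (v n), snd (v n), 0)"

lemma x0_FE: "v \<in> ECinf N A \<Longrightarrow> x0 v \<in> FE N A v"
  by (auto simp: FE_def EAinf_def ECinf_def x0_def edges_def er_def es_def piE_def)

lemma FE_EAinf: "x \<in> FE N A v \<Longrightarrow> x \<in> EAinf N A"
  by (simp add: FE_def)

lemma FE_piE: "x \<in> FE N A v \<Longrightarrow> piE x = v"
  by (simp add: FE_def)

lemma FE_shift: "x \<in> FE N A v \<Longrightarrow> shift x \<in> FE N A (shift v)"
  by (auto simp: FE_def EAinf_shift piE_shift)

lemma FE_shift_pow: "x \<in> FE N A v \<Longrightarrow> (shift ^^ K) x \<in> FE N A ((shift ^^ K) v)"
  by (auto simp: FE_def EAinf_shift_pow piE_shift_pow)

lemma ae_FE: "x \<in> FE N A v \<Longrightarrow> ae_rel N A B x y \<Longrightarrow> y \<in> FE N A v"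
  using ae_piE ae_EAinf by (fastforce simp: FE_def)

abbreviation prodv :: "(nat \<Rightarrow> nat \<Rightarrow> nat) \<Rightarrow> (nat \<Rightarrow> nat \<times> nat) \<Rightarrow> nat \<Rightarrow> nat" where
  "prodv A v n \<equiv> (\<Prod>i<Suc n. A (fst (v i)) (snd (v i)))"

lemma pA_FE: "x \<in> FE N A v \<Longrightarrow> pA A (finpref x n) = prodv A v n"
  by (auto simp: FE_def pA_finpref piE_def)

lemma supA_unb_iff: "supA A v = \<infinity> \<longleftrightarrow> (\<forall>M. \<exists>n. M < prodv A v n)"
proof
  assume a: "supA A v = \<infinity>"
  show "\<forall>M. \<exists>n. M < prodv A v n"
  proof (rule ccontr)
    assume "\<not> (\<forall>M. \<exists>n. M < prodv A v n)"
    then obtain M where "\<And>n. prodv A v n \<le> M" by (auto simp: not_less)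
    then have "supA A v \<le> enat M" unfolding supA_def by (intro SUP_least) auto
    then show False using a by simp
  qed
next
  assume u: "\<forall>M. \<exists>n. M < prodv A v n"
  show "supA A v = \<infinity>"
  proof (rule ccontr)
    assume "supA A v \<noteq> \<infinity>"
    then obtain M where M: "supA A v = enat M" by auto
    obtain n where "M < prodv A v n" using u by blast
    moreover have "enat (prodv A v n) \<le> supA A v" unfolding supA_def by (rule SUP_upper) simp
    ultimately show False using M by simp
  qed
qed

lemma supA_fin: "supA A v < \<infinity> \<Longrightarrow> \<exists>M. \<forall>n. prodv A v n \<le> M"
proof -
  assume "supA A v < \<infinity>"
  then obtain M where M: "supA A v = enat M" by auto
  have "enat (prodv A v n) \<le> supA A v" for n unfolding supA_def by (rule SUP_upper) simp
  then show ?thesis using M by auto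
qed

lemma supA_shift:
  assumes v: "v \<in> ECinf N A" and s: "supA A v = \<infinity>"
  shows "supA A (shift v) = \<infinity>"
proof -
  define a0 where "a0 = A (fst (v 0)) (snd (v 0))"
  have a0: "0 < a0" using v by (simp add: ECinf_def a0_def)
  have pos1: "0 < prodv A (shift v) 0" using ECinf_shift[OF v] by (simp add: ECinf_def)
  have "\<exists>n. M < prodv A (shift v) n" for M
  proof -
    obtain n where n: "a0 * M < prodv A v n" using s supA_unb_iff by blast
    show ?thesis
    proof (cases n)
      case 0
      have "prodv A v 0 = a0 * 1" by (simp add: a0_def)
      then have "a0 * M < a0 * 1" using n 0 by simp
      then have "M < 1" by (simp only: mult_less_cancel1)
      then show ?thesis using pos1 by (intro exI[of _ 0]) simp
    next
      case (Suc m)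
      have "prodv A v (Suc m) = a0 * prodv A (shift v) m"
        unfolding a0_def by (simp only: prod.lessThan_Suc_shift shift_def)
      then have "a0 * M < a0 * prodv A (shift v) m" using n Suc by simp
      then have "M < prodv A (shift v) m" by (simp only: mult_less_cancel1)
      then show ?thesis by blast
    qed
  qed
  then show ?thesis using supA_unb_iff by blast
qed

lemma allB1_FE:
  assumes v: "v \<in> ECinf N A" and B01: "\<forall>i<N. \<forall>j<N. B i j \<in> {0, 1}" and K: "Kv B v = 0"
    and x: "x \<in> FE N A v"
  shows "allB1 B (finpref x n)"
proof -
  have "B (er (x j)) (es (x j)) = 1" for j
  proof -
    have "(er (x j), es (x j)) = v j" using x by (auto simp: FE_def piE_def fun_eq_iff)
    then have "er (x j) = fst (v j)" "es (x j) = snd (v j)" by (metis fst_conv snd_conv)+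
    moreover have "fst (v j) < N" "snd (v j) < N" using v by (auto simp: ECinf_def)
    moreover have "\<not> Bz B v j" using K Kv_0 by blast
    ultimately show ?thesis using B01 by force
  qed
  then show ?thesis by (auto simp: allB1_def set_finpref)
qed


lemma ae_B1_iff:
  assumes x: "x \<in> EAinf N A" and y: "y \<in> EAinf N A" and p: "piE x = piE y"
    and b: "\<And>n. allB1 B (finpref x n)"
  shows "ae_rel N A B x y \<longleftrightarrow> (\<exists>M k. \<forall>n. \<bar>k n\<bar> \<le> M \<and>
           val A (finpref y n) = (k n + val A (finpref x n)) mod int (pA A (finpref x n)))"
proof
  assume "ae_rel N A B x y"
  then obtain M ks where ks: "\<And>n. \<bar>ks n\<bar> \<le> M \<and> act A B (0, ks n) (finpref x n) = finpref y n"
    unfolding ae_bounded by blast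
  have "val A (finpref y n) = (ks n + val A (finpref x n)) mod int (pA A (finpref x n))" for n
    using act_val[OF EAinf_finpref[OF x] b[of n], of 0 "ks n"] ks[of n] by simp
  then show "\<exists>M k. \<forall>n. \<bar>k n\<bar> \<le> M \<and>
           val A (finpref y n) = (k n + val A (finpref x n)) mod int (pA A (finpref x n))"
    using ks by blast
next
  assume "\<exists>M k. \<forall>n. \<bar>k n\<bar> \<le> M \<and>
           val A (finpref y n) = (k n + val A (finpref x n)) mod int (pA A (finpref x n))"
  then obtain M k where k: "\<And>n. \<bar>k n\<bar> \<le> M" and
    kv: "\<And>n. val A (finpref y n) = (k n + val A (finpref x n)) mod int (pA A (finpref x n))" by blast
  have "act A B (0, k n) (finpref x n) = finpref y n" for n
  proof (rule val_inj)
    show "set (act A B (0, k n) (finpref x n)) \<subseteq> edges N A" by (rule act_edges[OF EAinf_finpref[OF x]])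
    show "set (finpref y n) \<subseteq> edges N A" by (rule EAinf_finpref[OF y])
    show "map ij (act A B (0, k n) (finpref x n)) = map ij (finpref y n)"
      using act_ij ij_finpref_piE[OF p] by metis
    show "val A (act A B (0, k n) (finpref x n)) = val A (finpref y n)"
      using act_val[OF EAinf_finpref[OF x] b[of n]] kv by simp
  qed
  then show "ae_rel N A B x y" unfolding ae_bounded using x y k
    by (intro conjI exI[of _ M] exI[of _ k]) auto
qed

lemma case3_rel:
  assumes v: "v \<in> ECinf N A" and B01: "\<forall>i<N. \<forall>j<N. B i j \<in> {0, 1}" and K: "Kv B v = 0"
    and s: "supA A v < \<infinity>" and x: "x \<in> FE N A v" and y: "y \<in> FE N A v"
  shows "ae_rel N A B x y"
proof -
  obtain M where M: "\<And>n. prodv A v n \<le> M" using supA_fin[OF s] by blast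
  have xE: "x \<in> EAinf N A" and yE: "y \<in> EAinf N A" using x y by (auto simp: FE_def)
  have p: "piE x = piE y" using x y by (simp add: FE_def)
  note iff = ae_B1_iff[OF xE yE p allB1_FE[OF v B01 K x]]
  define vx where "vx n = val A (finpref x n)" for n
  define vy where "vy n = val A (finpref y n)" for n
  have pe: "pA A (finpref x n) = prodv A v n" "pA A (finpref y n) = prodv A v n" for n
    using pA_FE x y by auto
  have bx: "0 \<le> vx n" "vx n < int (prodv A v n)" for n
    using val_bounds[OF EAinf_finpref[OF xE, of n]] pe[of n] by (auto simp: vx_def)
  have by': "0 \<le> vy n" "vy n < int (prodv A v n)" for n
    using val_bounds[OF EAinf_finpref[OF yE, of n]] pe[of n] by (auto simp: vy_def)
  define k where "k n = vy n - vx n" for n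
  have kb: "\<bar>k n\<bar> \<le> int M" for n
  proof -
    have "int (prodv A v n) \<le> int M" using M[of n] by (simp only: of_nat_le_iff)
    then show ?thesis using bx[of n] by'[of n] unfolding k_def by linarith
  qed
  have "vy n = (k n + vx n) mod int (prodv A v n)" for n
    using by'[of n] unfolding k_def by simp
  then have "\<exists>M k. \<forall>n. \<bar>k n\<bar> \<le> M \<and>
           val A (finpref y n) = (k n + val A (finpref x n)) mod int (pA A (finpref x n))"
    using kb pe by (intro exI[of _ "int M"] exI[of _ k]) (simp add: vx_def vy_def)
  then show ?thesis using iff by blast
qed

lemma case2_rel:
  assumes v: "v \<in> ECinf N A" and B01: "\<forall>i<N. \<forall>j<N. B i j \<in> {0, 1}" and K: "Kv B v = 0"
    and s: "supA A v = \<infinity>" and x: "x \<in> FE N A v" and y: "y \<in> FE N A v"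
  shows "ae_rel N A B x y \<longleftrightarrow> tt A y - tt A x \<in> \<int>"
proof -
  have xE: "x \<in> EAinf N A" and yE: "y \<in> EAinf N A" using x y by (auto simp: FE_def)
  have p: "piE x = piE y" using x y by (simp add: FE_def)
  have unb: "\<And>M. \<exists>n. M < prodv A v n" using s supA_unb_iff by blast
  have pe: "pA A (finpref x n) = prodv A v n" "pA A (finpref y n) = prodv A v n" for n
    using pA_FE x y by auto
  have ppos: "0 < prodv A v n" for n using pA_finpref_pos[OF xE, of n] pe[of n] by simp
  note iff = ae_B1_iff[OF xE yE p allB1_FE[OF v B01 K x]]
  define vx where "vx n = val A (finpref x n)" for n
  define vy where "vy n = val A (finpref y n)" for n
  define P where "P n = real (prodv A v n)" for n
  have P: "P n > 0" for n unfolding P_def using ppos[of n] by (simp only: of_nat_0_less_iff)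
  have SSx: "SS A x n = real_of_int (vx n) / P n" for n by (simp add: vx_def P_def pe)
  have SSy: "SS A y n = real_of_int (vy n) / P n" for n by (simp add: vy_def P_def pe)
  have tx: "real_of_int (vx n) / P n \<le> tt A x" "tt A x \<le> real_of_int (vx n) / P n + 1 / P n" for n
    using tt_bounds(1)[OF xE, of n] tt_bounds(2)[OF xE, of n] unfolding SSx by (simp_all add: pe P_def)
  have ty: "real_of_int (vy n) / P n \<le> tt A y" "tt A y \<le> real_of_int (vy n) / P n + 1 / P n" for n
    using tt_bounds(1)[OF yE, of n] tt_bounds(2)[OF yE, of n] unfolding SSy by (simp_all add: pe P_def)
  have vyb: "0 \<le> vy n" "vy n < int (prodv A v n)" for n
    using val_bounds[OF EAinf_finpref[OF yE, of n]] pe[of n] by (auto simp: vy_def)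
  show ?thesis
  proof
    assume "ae_rel N A B x y"
    then obtain M k where k: "\<And>n. \<bar>k n\<bar> \<le> M" and
      kv0: "\<And>n. val A (finpref y n) = (k n + val A (finpref x n)) mod int (pA A (finpref x n))"
      using iff by blast
    have kv: "vy n = (k n + vx n) mod int (prodv A v n)" for n
      using kv0[of n] pe[of n] by (simp add: vx_def vy_def)
    define d where "d n = (k n + vx n) div int (prodv A v n)" for n
    have M0: "0 \<le> M" using k[of 0] by linarith
    have dd: "vy n = k n + vx n - int (prodv A v n) * d n" for n
    proof -
      have "(k n + vx n) - (k n + vx n) div int (prodv A v n) * int (prodv A v n) = (k n + vx n) mod int (prodv A v n)"
        by (rule minus_div_mult_eq_mod)
      then show ?thesis using kv[of n] unfolding d_def by (simp add: mult.commute)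
    qed
    show "tt A y - tt A x \<in> \<int>"
    proof (rule int_limit[of "prodv A v" _ "\<lambda>n. - d n" "real_of_int M + 1"])
      show "\<exists>n. M' < prodv A v n" for M' using unb .
      show "0 \<le> real_of_int M + 1" using M0 by simp
      show "0 < prodv A v n" for n using ppos .
      fix n
      have r: "real_of_int (vy n) = real_of_int (k n) + real_of_int (vx n) - P n * real_of_int (d n)"
        using dd[of n] unfolding P_def by simp
      have e0: "real_of_int (vy n) - real_of_int (vx n) = real_of_int (k n) - P n * real_of_int (d n)"
        using r by linarith
      have e1: "real_of_int (vy n) / P n - real_of_int (vx n) / P n = (real_of_int (vy n) - real_of_int (vx n)) / P n"
        by (simp only: diff_divide_distrib)
      have e2: "(real_of_int (k n) - P n * real_of_int (d n)) / P n = real_of_int (k n) / P n - real_of_int (d n)"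
        using P[of n] by (simp add: diff_divide_distrib)
      have e: "real_of_int (vy n) / P n - real_of_int (vx n) / P n = real_of_int (k n) / P n - real_of_int (d n)"
        using e0 e1 e2 by simp
      have km: "real_of_int \<bar>k n\<bar> \<le> real_of_int M" using k[of n] by (simp only: of_int_le_iff)
      have "\<bar>real_of_int (k n)\<bar> / P n \<le> real_of_int M / P n"
        by (rule divide_right_mono[OF _ less_imp_le[OF P[of n]]]) (use km in simp)
      then have kb: "\<bar>real_of_int (k n) / P n\<bar> \<le> real_of_int M / P n"
        using P[of n] by (simp add: abs_divide abs_of_pos[OF P[of n]])
      have "\<bar>tt A y - tt A x - real_of_int (- d n)\<bar> \<le> 1 / P n + real_of_int M / P n"
      proof -
        have "tt A y - tt A x + real_of_int (d n) = (tt A y - real_of_int (vy n) / P n) - (tt A x - real_of_int (vx n) / P n) + real_of_int (k n) / P n"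
          using e by linarith
        moreover have "0 \<le> tt A y - real_of_int (vy n) / P n" "tt A y - real_of_int (vy n) / P n \<le> 1 / P n"
          using ty[of n] by linarith+
        moreover have "0 \<le> tt A x - real_of_int (vx n) / P n" "tt A x - real_of_int (vx n) / P n \<le> 1 / P n"
          using tx[of n] by linarith+
        ultimately show ?thesis using kb by (simp only: of_int_minus diff_minus_eq_add abs_le_iff) linarith
      qed
      also have "\<dots> = (real_of_int M + 1) / P n" by (simp add: add_divide_distrib)
      finally show "\<bar>tt A y - tt A x - real_of_int (- d n)\<bar> \<le> (real_of_int M + 1) / real (prodv A v n)"
        by (simp add: P_def)
    qed
  next
    assume "tt A y - tt A x \<in> \<int>"
    then obtain z where z: "tt A y - tt A x = real_of_int z" by (auto elim: Ints_cases)
    define k where "k n = vy n - vx n - int (prodv A v n) * z" for n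
    have kb: "\<bar>k n\<bar> \<le> 1" for n
    proof -
      have r: "real_of_int (k n) = real_of_int (vy n) - real_of_int (vx n) - P n * real_of_int z"
        unfolding k_def P_def by simp
      have e2: "(real_of_int (vy n) - real_of_int (vx n) - P n * real_of_int z) / P n
          = real_of_int (vy n) / P n - real_of_int (vx n) / P n - real_of_int z"
        using P[of n] by (simp add: diff_divide_distrib)
      have "real_of_int (k n) / P n = (real_of_int (vy n) / P n - tt A y) - (real_of_int (vx n) / P n - tt A x)"
        using z unfolding r e2 by linarith
      moreover have "\<bar>(real_of_int (vy n) / P n - tt A y) - (real_of_int (vx n) / P n - tt A x)\<bar> \<le> 1 / P n"
        using tx[of n] ty[of n] by (simp only: abs_le_iff) linarith
      ultimately have "\<bar>real_of_int (k n)\<bar> / P n \<le> 1 / P n" using P[of n] by simp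
      then have "\<bar>real_of_int (k n)\<bar> \<le> 1" using P[of n] by (simp add: divide_le_cancel)
      then show ?thesis by linarith
    qed
    have "vy n = (k n + vx n) mod int (prodv A v n)" for n
    proof -
      define Q where "Q = int (prodv A v n)"
      have "k n + vx n = vy n + (- z) * Q"
        unfolding Q_def by (simp add: k_def algebra_simps)
      then have "(k n + vx n) mod Q = vy n mod Q"
        by (simp only: mod_mult_self1)
      also have "\<dots> = vy n" using vyb[of n] unfolding Q_def by (simp only: mod_pos_pos_trivial)
      finally show ?thesis unfolding Q_def by simp
    qed
    then have "\<exists>M k. \<forall>n. \<bar>k n\<bar> \<le> M \<and>
           val A (finpref y n) = (k n + val A (finpref x n)) mod int (pA A (finpref x n))"
      using kb pe by (intro exI[of _ 1] exI[of _ k]) (simp add: vx_def vy_def)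
    then show "ae_rel N A B x y" using iff by blast
  qed
qed


abbreviation PT :: "nat \<Rightarrow> (nat \<Rightarrow> nat \<Rightarrow> nat) \<Rightarrow> (nat \<Rightarrow> edge) topology" where
  "PT N A \<equiv> product_topology (\<lambda>_. discrete_topology (edges N A)) UNIV"

lemma topspace_PT: "topspace (PT N A) = {x. \<forall>i. x i \<in> edges N A}"
  by (auto simp: PiE_UNIV_domain)

lemma EAinf_sub: "EAinf N A \<subseteq> topspace (PT N A)"
  by (auto simp: topspace_PT EAinf_def)

lemma topspace_EAtop: "topspace (EAtop N A) = EAinf N A"
  unfolding EAtop_def topspace_subtopology using EAinf_sub by blast

lemma cyl_open_PT: "openin (PT N A) {y \<in> topspace (PT N A). \<forall>j<n. y j = x j}"
proof (induction n)
  case 0 then show ?case using openin_topspace[of "PT N A"] by simp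
next
  case (Suc n)
  have o: "openin (PT N A) {y \<in> topspace (PT N A). y n \<in> {x n} \<inter> edges N A}"
    by (rule openin_continuous_map_preimage[OF continuous_map_product_projection]) auto
  have "{y \<in> topspace (PT N A). \<forall>j<Suc n. y j = x j} =
        {y \<in> topspace (PT N A). \<forall>j<n. y j = x j} \<inter> {y \<in> topspace (PT N A). y n \<in> {x n} \<inter> edges N A}"
    by (auto simp: less_Suc_eq topspace_PT)
  then show ?case using Suc o by (simp add: openin_Int)
qed

lemma cyl_open:
  assumes S: "S \<subseteq> topspace (PT N A)"
  shows "openin (subtopology (PT N A) S) {y \<in> S. \<forall>j<n. y j = x j}"
proof -
  have "S \<inter> {y \<in> topspace (PT N A). \<forall>j<n. y j = x j} = {y \<in> S. \<forall>j<n. y j = x j}"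
    using S by blast
  moreover have "openin (subtopology (PT N A) S) (S \<inter> {y \<in> topspace (PT N A). \<forall>j<n. y j = x j})"
    by (rule openin_subtopology_Int2[OF cyl_open_PT])
  ultimately show ?thesis by (simp only:)
qed

lemma LC_cont:
  assumes S: "S \<subseteq> topspace (PT N A)" and fT: "\<And>x. x \<in> S \<Longrightarrow> f x \<in> T"
    and lc: "\<And>x. x \<in> S \<Longrightarrow> \<exists>n. \<forall>y\<in>S. (\<forall>j<n. y j = x j) \<longrightarrow> f y = f x"
  shows "continuous_map (subtopology (PT N A) S) (discrete_topology T) f"
  unfolding continuous_map_def
proof (intro conjI allI impI)
  have ts: "topspace (subtopology (PT N A) S) = S" using S by (simp only: topspace_subtopology_subset)
  show "f \<in> topspace (subtopology (PT N A) S) \<rightarrow> topspace (discrete_topology T)"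
    using fT ts by auto
  fix U assume "openin (discrete_topology T) U"
  show "openin (subtopology (PT N A) S) {x \<in> topspace (subtopology (PT N A) S). f x \<in> U}"
  proof (subst openin_subopen, intro ballI)
    fix x assume x: "x \<in> {x \<in> topspace (subtopology (PT N A) S). f x \<in> U}"
    have xS: "x \<in> S" using x unfolding ts by blast
    then obtain n where n: "\<forall>y\<in>S. (\<forall>j<n. y j = x j) \<longrightarrow> f y = f x" using lc by blast
    show "\<exists>T. openin (subtopology (PT N A) S) T \<and> x \<in> T \<and> T \<subseteq> {x \<in> topspace (subtopology (PT N A) S). f x \<in> U}"
      using cyl_open[OF S, of n x] x n ts by (intro exI[of _ "{y \<in> S. \<forall>j<n. y j = x j}"]) auto
  qed
qed

lemma real_cont:
  assumes S: "S \<subseteq> topspace (PT N A)"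
    and lc: "\<And>x e. x \<in> S \<Longrightarrow> e > 0 \<Longrightarrow> \<exists>n. \<forall>y\<in>S. (\<forall>j<n. y j = x j) \<longrightarrow> \<bar>g y - g x\<bar> < e"
  shows "continuous_map (subtopology (PT N A) S) euclideanreal g"
  unfolding continuous_map_def
proof (intro conjI allI impI)
  have ts: "topspace (subtopology (PT N A) S) = S" using S by (simp only: topspace_subtopology_subset)
  show "g \<in> topspace (subtopology (PT N A) S) \<rightarrow> topspace euclideanreal" by simp
  fix U assume "openin euclideanreal U"
  then have U: "open U" by simp
  show "openin (subtopology (PT N A) S) {x \<in> topspace (subtopology (PT N A) S). g x \<in> U}"
  proof (subst openin_subopen, intro ballI)
    fix x assume x: "x \<in> {x \<in> topspace (subtopology (PT N A) S). g x \<in> U}"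
    then obtain e where e: "e > 0" "\<And>y. \<bar>y - g x\<bar> < e \<Longrightarrow> y \<in> U" using U unfolding open_real by blast
    have xS: "x \<in> S" using x unfolding ts by blast
    obtain n where n: "\<forall>y\<in>S. (\<forall>j<n. y j = x j) \<longrightarrow> \<bar>g y - g x\<bar> < e" using lc[OF xS e(1)] by blast
    show "\<exists>T. openin (subtopology (PT N A) S) T \<and> x \<in> T \<and> T \<subseteq> {x \<in> topspace (subtopology (PT N A) S). g x \<in> U}"
      using cyl_open[OF S, of n x] x n ts e by (intro exI[of _ "{y \<in> S. \<forall>j<n. y j = x j}"]) auto
  qed
qed

lemma istop_q: "istopology (\<lambda>U. U \<subseteq> f ` topspace X \<and> openin X {x \<in> topspace X. f x \<in> U})"
proof -
  have 1: "S \<inter> T \<subseteq> f ` topspace X \<and> openin X {x \<in> topspace X. f x \<in> S \<inter> T}"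
    if "S \<subseteq> f ` topspace X \<and> openin X {x \<in> topspace X. f x \<in> S}"
      "T \<subseteq> f ` topspace X \<and> openin X {x \<in> topspace X. f x \<in> T}" for S T
  proof -
    have "{x \<in> topspace X. f x \<in> S \<inter> T} = {x \<in> topspace X. f x \<in> S} \<inter> {x \<in> topspace X. f x \<in> T}" by auto
    then show ?thesis using that by (auto intro: openin_Int)
  qed
  have 2: "\<Union>K \<subseteq> f ` topspace X \<and> openin X {x \<in> topspace X. f x \<in> \<Union>K}"
    if K: "\<forall>U\<in>K. U \<subseteq> f ` topspace X \<and> openin X {x \<in> topspace X. f x \<in> U}" for K
  proof -
    have "{x \<in> topspace X. f x \<in> \<Union>K} = (\<Union>U\<in>K. {x \<in> topspace X. f x \<in> U})" by auto
    then show ?thesis using K by (auto intro: openin_Union)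
  qed
  show ?thesis unfolding istopology_def using 1 2 by blast
qed

lemma openin_qt: "openin (quotient_topology X f) U \<longleftrightarrow> U \<subseteq> f ` topspace X \<and> openin X {x \<in> topspace X. f x \<in> U}"
  unfolding quotient_topology_def topology_inverse'[OF istop_q] ..

lemma topspace_qt: "topspace (quotient_topology X f) = f ` topspace X"
proof -
  have "{x \<in> topspace X. f x \<in> f ` topspace X} = topspace X" by auto
  then have "openin (quotient_topology X f) (f ` topspace X)" unfolding openin_qt by simp
  then have "f ` topspace X \<subseteq> topspace (quotient_topology X f)" by (rule openin_subset)
  moreover have "topspace (quotient_topology X f) \<subseteq> f ` topspace X"
    using openin_qt[of X f "topspace (quotient_topology X f)"] by simp
  ultimately show ?thesis by blast
qed

lemma quotient_map_qt: "quotient_map X (quotient_topology X f) f"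
  unfolding quotient_map_def topspace_qt openin_qt by auto

lemma topspace_J: "topspace (limit_space N A B) = aeclass N A B ` EAinf N A"
  unfolding limit_space_def topspace_qt topspace_EAtop ..

lemma quotient_J: "quotient_map (EAtop N A) (limit_space N A B) (aeclass N A B)"
  unfolding limit_space_def by (rule quotient_map_qt)

lemma finite_edges: "finite (edges N A)"
proof -
  have "edges N A = (\<Union>i\<in>{..<N}. \<Union>j\<in>{..<N}. (\<lambda>m. (i,j,m)) ` {..<A i j})"
    by (auto simp: edges_def)
  then show ?thesis by simp
qed

lemma compact_PT: "compact_space (PT N A)"
  by (simp add: compact_space_product_topology compact_space_discrete_topology finite_edges)


lemma FE_closed_PT: "closedin (PT N A) {x \<in> topspace (PT N A). \<forall>n. piE x n = v n}"
proof -
  have eq: "{x \<in> topspace (PT N A). \<forall>n. piE x n = v n} =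
        \<Inter> (range (\<lambda>n. {x \<in> topspace (PT N A). x n \<in> {e \<in> edges N A. ij e = v n}}))"
    by (auto simp: piE_def ij_def PiE_iff)
  have "closedin (PT N A) {x \<in> topspace (PT N A). x n \<in> {e \<in> edges N A. ij e = v n}}" for n
    by (rule closedin_continuous_map_preimage[OF continuous_map_product_projection]) auto
  then have "closedin (PT N A) (\<Inter> (range (\<lambda>n. {x \<in> topspace (PT N A). x n \<in> {e \<in> edges N A. ij e = v n}})))"
    by (intro closedin_Inter) auto
  then show ?thesis by (simp only: eq)
qed

lemma FE_eq_PT: "FE N A v = EAinf N A \<inter> {x \<in> topspace (PT N A). \<forall>n. piE x n = v n}"
  using EAinf_sub by (auto simp: FE_def)

lemma FE_eq: "v \<in> ECinf N A \<Longrightarrow> FE N A v = {x \<in> topspace (PT N A). \<forall>n. piE x n = v n}"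
proof
  assume v: "v \<in> ECinf N A"
  show "{x \<in> topspace (PT N A). \<forall>n. piE x n = v n} \<subseteq> FE N A v"
  proof
    fix x assume x: "x \<in> {x \<in> topspace (PT N A). \<forall>n. piE x n = v n}"
    then have e: "\<And>n. x n \<in> edges N A" and p: "\<And>n. (er (x n), es (x n)) = v n"
      by (auto simp: piE_def PiE_iff)
    have "es (x (Suc n)) = er (x n)" for n
    proof -
      have vv: "snd (v (Suc n)) = fst (v n)" using v by (simp add: ECinf_def)
      have "es (x (Suc n)) = snd (v (Suc n))" using arg_cong[OF p[of "Suc n"], of snd] by simp
      moreover have "er (x n) = fst (v n)" using arg_cong[OF p[of n], of fst] by simp
      ultimately show ?thesis using vv by simp
    qed
    then have "x \<in> EAinf N A" using e by (simp add: EAinf_def)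
    then show "x \<in> FE N A v" using x by (simp add: FE_def fun_eq_iff)
  qed
qed (use FE_eq_PT in blast)

lemma FE_closed: "closedin (EAtop N A) (FE N A v)"
  unfolding EAtop_def FE_eq_PT closedin_subtopology using FE_closed_PT by blast

lemma fibreE_eq: "fibreE N A v = subtopology (EAtop N A) (FE N A v)"
  by (simp add: fibreE_def FE_def)

lemma FE_sub: "FE N A v \<subseteq> EAinf N A"
  by (auto simp: FE_def)

lemma FE_sub_PT: "FE N A v \<subseteq> topspace (PT N A)"
  using FE_sub EAinf_sub by blast

lemma fibreE_PT: "fibreE N A v = subtopology (PT N A) (FE N A v)"
  unfolding fibreE_eq EAtop_def subtopology_subtopology using FE_sub by (metis Int_absorb1)

lemma topspace_fibreE: "topspace (fibreE N A v) = FE N A v"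
  unfolding fibreE_PT using FE_sub_PT by (rule topspace_subtopology_subset)

definition Vs :: "nat \<Rightarrow> (nat \<Rightarrow> nat \<Rightarrow> nat) \<Rightarrow> (nat \<Rightarrow> nat \<Rightarrow> int) \<Rightarrow> (nat \<Rightarrow> nat \<times> nat) \<Rightarrow> (nat \<Rightarrow> edge) set set" where
  "Vs N A B v = {c \<in> topspace (limit_space N A B). piJ c = v}"

lemma preim_Vs: "{x \<in> topspace (EAtop N A). aeclass N A B x \<in> Vs N A B v} = FE N A v"
  unfolding Vs_def topspace_EAtop topspace_J using piJ_aeclass by (auto simp: FE_def)

lemma Vs_closed: "closedin (limit_space N A B) (Vs N A B v)"
proof -
  have "Vs N A B v \<subseteq> topspace (limit_space N A B)" by (auto simp: Vs_def)
  moreover have "\<forall>U\<subseteq>topspace (limit_space N A B).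
       closedin (EAtop N A) {x \<in> topspace (EAtop N A). aeclass N A B x \<in> U} = closedin (limit_space N A B) U"
    using quotient_J[of N A B] unfolding quotient_map_closedin by blast
  ultimately have "closedin (EAtop N A) {x \<in> topspace (EAtop N A). aeclass N A B x \<in> Vs N A B v} = closedin (limit_space N A B) (Vs N A B v)"
    by blast
  then show ?thesis using FE_closed[of N A v] unfolding preim_Vs by blast
qed

lemma fibreJ_eq: "fibreJ N A B v = subtopology (limit_space N A B) (Vs N A B v)"
  by (simp add: fibreJ_def Vs_def)

lemma QF: "quotient_map (fibreE N A v) (fibreJ N A B v) (aeclass N A B)"
  unfolding fibreE_eq fibreJ_eq
  by (rule quotient_map_restriction[OF quotient_J preim_Vs]) (simp add: Vs_closed)

lemma topspace_fibreJ: "topspace (fibreJ N A B v) = aeclass N A B ` FE N A v"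
  using quotient_imp_surjective_map[OF QF] topspace_fibreE by metis

lemma compact_fibreE: "v \<in> ECinf N A \<Longrightarrow> compact_space (fibreE N A v)"
  unfolding fibreE_PT
  by (rule compact_space_subtopology, simp only: FE_eq, rule closedin_compact_space[OF compact_PT FE_closed_PT])

lemma compact_fibreJ: "v \<in> ECinf N A \<Longrightarrow> compact_space (fibreJ N A B v)"
  using image_compactin[OF compact_fibreE[unfolded compact_space_def] quotient_imp_continuous_map[OF QF]]
    quotient_imp_surjective_map[OF QF] unfolding compact_space_def by metis

lemma rep_fibreJ:
  assumes "c \<in> topspace (fibreJ N A B v)"
  shows "rep c \<in> FE N A v" "aeclass N A B (rep c) = c"
proof -
  obtain x where x: "x \<in> FE N A v" and c: "c = aeclass N A B x" using assms topspace_fibreJ by blast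
  have xE: "x \<in> EAinf N A" using x FE_sub by blast
  show "rep c \<in> FE N A v" using ae_FE[OF x rep_aeclass(1)[OF xE]] c by simp
  show "aeclass N A B (rep c) = c" using rep_aeclass(2)[OF xE] c by simp
qed

lemma rep_FE: "x \<in> FE N A v \<Longrightarrow> ae_rel N A B x (rep (aeclass N A B x)) \<and> rep (aeclass N A B x) \<in> FE N A v"
  using rep_aeclass(1)[of x N A B] FE_sub ae_FE by blast

lemma aeclass_eq_FE: "x \<in> FE N A v \<Longrightarrow> aeclass N A B x = aeclass N A B y \<longleftrightarrow> ae_rel N A B x y"
  using aeclass_eq FE_sub by blast


lemma case1_rel:
  assumes K: "Kv B v = \<infinity>" and x: "x \<in> FE N A v" and ae: "ae_rel N A B x y"
  shows "y = x"
proof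
  fix m
  have "infinite {n. Bz B v n}" using K Kv_inf by blast
  then obtain n where n: "m \<le> n" "Bz B v n" unfolding infinite_nat_iff_unbounded_le by blast
  have "(er (x n), es (x n)) = v n" using x by (auto simp: FE_def piE_def fun_eq_iff)
  then have "B (er (x n)) (es (x n)) = 0" using n(2) by (metis fst_conv snd_conv)
  then have "\<forall>j\<le>n. x j = y j" by (rule ae_zeroB[OF ae])
  then show "y m = x m" using n(1) by simp
qed

lemma case1_homeo:
  assumes K: "Kv B v = \<infinity>"
  shows "homeomorphic_map (fibreJ N A B v) (fibreE N A v) rep"
proof -
  have rr: "rep (aeclass N A B x) = x" if "x \<in> FE N A v" for x
    using case1_rel[OF K that] rep_FE[OF that] by blast
  have "homeomorphic_maps (fibreE N A v) (fibreJ N A B v) (aeclass N A B) rep"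
    unfolding homeomorphic_maps_def
  proof (intro conjI ballI)
    show "continuous_map (fibreE N A v) (fibreJ N A B v) (aeclass N A B)"
      by (rule quotient_imp_continuous_map[OF QF])
    show "continuous_map (fibreJ N A B v) (fibreE N A v) rep"
    proof (rule continuous_compose_quotient_map[OF QF])
      show "continuous_map (fibreE N A v) (fibreE N A v) (rep \<circ> aeclass N A B)"
        by (rule continuous_map_eq[OF continuous_map_id]) (simp add: rr topspace_fibreE)
    qed
    show "rep (aeclass N A B x) = x" if "x \<in> topspace (fibreE N A v)" for x
      using rr that by (simp add: topspace_fibreE)
    show "aeclass N A B (rep y) = y" if "y \<in> topspace (fibreJ N A B v)" for y
      using rep_fibreJ(2)[OF that] .
  qed
  then show ?thesis using homeomorphic_maps_map by blast
qed

lemma case1_equiv: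
  assumes K: "Kv B v = \<infinity>" and c: "c \<in> topspace (fibreJ N A B v)"
  shows "rep (sigJ N A B c) = shift (rep c)"
proof -
  have r: "rep c \<in> FE N A v" by (rule rep_fibreJ(1)[OF c])
  then have s: "shift (rep c) \<in> FE N A (shift v)" by (rule FE_shift)
  have "rep (aeclass N A B (shift (rep c))) = shift (rep c)"
    using case1_rel[OF Kv_shift_inf[OF K] s] rep_FE[OF s] by blast
  then show ?thesis by (simp add: sigJ_rep)
qed

lemma cis_int: "d - e \<in> \<int> \<Longrightarrow> cis (2 * pi * d) = cis (2 * pi * e)"
proof -
  assume "d - e \<in> \<int>"
  then have c1: "cis (2 * pi * (d - e)) = 1" by (rule cis_multiple_2pi)
  have "cis (2 * pi * e) * cis (2 * pi * (d - e)) = cis (2 * pi * e + 2 * pi * (d - e))" by (rule cis_mult)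
  also have "2 * pi * e + 2 * pi * (d - e) = 2 * pi * d" by (simp add: right_diff_distrib)
  finally show ?thesis using c1 by simp
qed

lemma cis_inj: "cis (2 * pi * d) = cis (2 * pi * e) \<Longrightarrow> d - e \<in> \<int>"
proof -
  assume a: "cis (2 * pi * d) = cis (2 * pi * e)"
  have "cis (2 * pi * d) / cis (2 * pi * e) = cis (2 * pi * d - 2 * pi * e)" by (rule cis_divide)
  also have "2 * pi * d - 2 * pi * e = 2 * pi * (d - e)" by (simp add: right_diff_distrib)
  finally have "cis (2 * pi * (d - e)) = 1" using a by (simp add: cis_neq_zero)
  then have "cos (2 * pi * (d - e)) = 1" by (metis cis.sel(1) one_complex.sel(1))
  then obtain z :: int where "2 * pi * (d - e) = real_of_int z * 2 * pi" using cos_one_2pi_int by blast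
  then have "d - e = real_of_int z" by simp
  then show ?thesis by simp
qed

lemma tt_cont:
  assumes v: "v \<in> ECinf N A" and s: "supA A v = \<infinity>"
  shows "continuous_map (fibreE N A v) euclideanreal (tt A)"
  unfolding fibreE_PT
proof (rule real_cont[OF FE_sub_PT])
  fix x e assume x: "x \<in> FE N A v" and e: "(0::real) < e"
  obtain n where n: "nat \<lceil>1 / e\<rceil> < prodv A v n" using s supA_unb_iff by blast
  have pn: "1 / e < real (prodv A v n)" using n by linarith
  have pp: "0 < real (prodv A v n)" using pn e
    by (meson divide_pos_pos less_trans zero_less_one)
  have "1 < e * real (prodv A v n)" using pn e by (simp add: divide_less_eq mult.commute)
  then have pe: "1 / real (prodv A v n) < e" using pp by (simp add: divide_less_eq)
  show "\<exists>n. \<forall>y\<in>FE N A v. (\<forall>j<n. y j = x j) \<longrightarrow> \<bar>tt A y - tt A x\<bar> < e"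
  proof (intro exI[of _ "Suc n"] ballI impI)
    fix y assume y: "y \<in> FE N A v" and eq: "\<forall>j<Suc n. y j = x j"
    have "finpref y n = finpref x n" using eq by (simp add: finpref_eq_iff)
    then have "\<bar>tt A y - tt A x\<bar> \<le> 1 / real (pA A (finpref y n))"
      using tt_close[OF FE_EAinf[OF y] FE_EAinf[OF x]] by blast
    also have "\<dots> = 1 / real (prodv A v n)" using pA_FE[OF y] by simp
    finally show "\<bar>tt A y - tt A x\<bar> < e" using pe by linarith
  qed
qed

lemma cis_cont: "continuous_map euclideanreal euclidean (\<lambda>r. cis (2 * pi * r))"
  unfolding continuous_map_iff_continuous2 by (intro continuous_on_cis continuous_intros)

lemma floor_digit:
  fixes u :: real and a :: nat
  assumes "0 < a"
  shows "0 \<le> \<lfloor>real a * u\<rfloor> - int a * \<lfloor>u\<rfloor>" "\<lfloor>real a * u\<rfloor> - int a * \<lfloor>u\<rfloor> < int a"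
proof -
  have "real_of_int (int a * \<lfloor>u\<rfloor>) \<le> real a * u"
    using assms by (simp add: mult_left_mono)
  then have "int a * \<lfloor>u\<rfloor> \<le> \<lfloor>real a * u\<rfloor>" by (simp add: le_floor_iff)
  then show "0 \<le> \<lfloor>real a * u\<rfloor> - int a * \<lfloor>u\<rfloor>" by simp
  have "real a * u < real a * (real_of_int \<lfloor>u\<rfloor> + 1)"
    using assms by (simp add: real_of_int_floor_add_one_gt)
  then have "real_of_int \<lfloor>real a * u\<rfloor> < real_of_int (int a * \<lfloor>u\<rfloor> + int a)"
    by (simp add: algebra_simps) (meson of_int_floor_le le_less_trans)
  then show "\<lfloor>real a * u\<rfloor> - int a * \<lfloor>u\<rfloor> < int a" by linarith
qed


lemma case2_surj:
  assumes v: "v \<in> ECinf N A" and s: "supA A v = \<infinity>" and th: "0 \<le> \<theta>" "\<theta> < 1"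
  shows "\<exists>x\<in>FE N A v. tt A x = \<theta>"
proof -
  define a where "a n = A (fst (v n)) (snd (v n))" for n
  have apos: "0 < a n" for n using v by (simp add: ECinf_def a_def)
  have vN: "fst (v n) < N" "snd (v n) < N" for n using v by (auto simp: ECinf_def)
  define P where "P n = prodv A v n" for n
  have P0: "P 0 = a 0" by (simp add: P_def a_def)
  have PS: "P (Suc m) = P m * a (Suc m)" for m by (simp add: P_def a_def)
  define f where "f n = \<lfloor>\<theta> * real (P n)\<rfloor>" for n
  define dg where "dg n = (case n of 0 \<Rightarrow> f 0 | Suc m \<Rightarrow> f (Suc m) - int (a (Suc m)) * f m)" for n
  have dgb: "0 \<le> dg n \<and> dg n < int (a n)" for n
  proof (cases n)
    case 0
    have fl: "\<lfloor>\<theta>\<rfloor> = 0" using th by (simp add: floor_eq_iff)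
    have "f 0 = \<lfloor>real (a 0) * \<theta>\<rfloor>" by (simp add: f_def P0 mult.commute)
    then show ?thesis using floor_digit[OF apos[of 0], of \<theta>] fl 0 by (simp add: dg_def)
  next
    case (Suc m)
    have eq: "\<theta> * real (P (Suc m)) = real (a (Suc m)) * (\<theta> * real (P m))" by (simp add: PS)
    have "f (Suc m) = \<lfloor>real (a (Suc m)) * (\<theta> * real (P m))\<rfloor>" unfolding f_def by (simp only: eq)
    then show ?thesis using floor_digit[OF apos[of "Suc m"], of "\<theta> * real (P m)"] Suc
      by (simp add: dg_def f_def)
  qed
  define x where "x n = (fst (v n), snd (v n), nat (dg n))" for n
  have xe: "x n \<in> edges N A" for n
    using vN[of n] dgb[of n] by (simp add: x_def edges_def a_def nat_less_iff)
  have xp: "piE x n = v n" for n by (simp add: x_def piE_def er_def es_def)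
  have xFE: "x \<in> FE N A v" unfolding FE_eq[OF v] using xe xp by (simp add: PiE_iff)
  have xE: "x \<in> EAinf N A" using xFE FE_sub by blast
  have V: "val A (finpref x n) = f n" for n
  proof (induction n)
    case 0
    then show ?case using dgb[of 0] by (simp add: x_def dig_def dg_def)
  next
    case (Suc n)
    have e1: "val A (finpref x (Suc n)) = dig (x (Suc n)) + int (A (er (x (Suc n))) (es (x (Suc n)))) * val A (finpref x n)"
      by (simp add: finpref_Suc)
    have e2: "A (er (x (Suc n))) (es (x (Suc n))) = a (Suc n)" by (simp add: x_def er_def es_def a_def)
    have "val A (finpref x (Suc n)) = dig (x (Suc n)) + int (a (Suc n)) * f n"
      by (simp only: e1 e2 Suc.IH)
    also have "\<dots> = f (Suc n)" using dgb[of "Suc n"] by (simp add: x_def dig_def dg_def)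
    finally show ?case .
  qed
  have pe: "pA A (finpref x n) = P n" for n using pA_FE[OF xFE] by (simp add: P_def)
  have Ppos: "0 < P n" for n using pA_finpref_pos[OF xE, of n] pe[of n] by simp
  have "tt A x - \<theta> = 0"
  proof (rule zero_limit[of P _ 2])
    show "\<exists>n. M < P n" for M using s supA_unb_iff unfolding P_def by blast
    show "0 < P n" for n by (rule Ppos)
    fix n
    define Q where "Q = real (P n)"
    have Q: "Q > 0" using Ppos[of n] by (simp add: Q_def)
    have ss: "SS A x n = real_of_int (f n) / Q" using V[of n] pe[of n] by (simp add: Q_def)
    have t1: "real_of_int (f n) / Q \<le> tt A x" "tt A x \<le> real_of_int (f n) / Q + 1 / Q"
      using tt_bounds[OF xE, of n] unfolding ss by (simp_all add: pe Q_def)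
    have f1: "real_of_int (f n) \<le> \<theta> * Q" "\<theta> * Q < real_of_int (f n) + 1"
      unfolding f_def Q_def by linarith+
    have f2: "real_of_int (f n) / Q \<le> \<theta>" using f1(1) Q by (simp add: divide_le_eq mult.commute)
    have f3: "\<theta> < real_of_int (f n) / Q + 1 / Q"
    proof -
      have "\<theta> * Q < (real_of_int (f n) + 1)" by (rule f1(2))
      then have "\<theta> < (real_of_int (f n) + 1) / Q" using Q by (simp add: less_divide_eq)
      then show ?thesis by (simp add: add_divide_distrib)
    qed
    have "\<bar>tt A x - \<theta>\<bar> \<le> 1 / Q" using t1 f2 f3 by (simp only: abs_le_iff) linarith
    also have "\<dots> \<le> 2 / Q" using Q by (simp add: divide_right_mono)
    finally show "\<bar>tt A x - \<theta>\<bar> \<le> 2 / real (P n)" by (simp add: Q_def)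
  qed
  then show ?thesis using xFE by auto
qed

lemma tt_shift:
  assumes x: "x \<in> EAinf N A"
  shows "tt A (shift x) = real (A (er (x 0)) (es (x 0))) * tt A x - real_of_int (dig (x 0))"
proof -
  define g where "g = (\<lambda>j. real_of_int (dig (x j)) / real (pA A (finpref x j)))"
  define a0 where "a0 = A (er (x 0)) (es (x 0))"
  have a0: "0 < a0" using edge_pos[OF EAinf_edge[OF x]] by (simp add: a0_def)
  have sg: "summable g" using summable_tt[OF x] by (simp only: g_def)
  have pS: "pA A (finpref x (Suc j)) = a0 * pA A (finpref (shift x) j)" for j
    unfolding pA_finpref a0_def by (simp only: prod.lessThan_Suc_shift shift_def)
  have tm: "real_of_int (dig (shift x j)) / real (pA A (finpref (shift x) j)) = real a0 * g (Suc j)" for j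
    using a0 by (simp add: g_def pS shift_def)
  have "tt A (shift x) = (\<Sum>j. real a0 * g (Suc j))" unfolding tt_def tm ..
  also have "\<dots> = real a0 * (\<Sum>j. g (Suc j))"
    by (rule suminf_mult) (simp add: summable_Suc_iff sg)
  also have "(\<Sum>j. g (Suc j)) = tt A x - g 0" using suminf_split_head[OF sg] by (simp add: tt_def g_def)
  also have "g 0 = real_of_int (dig (x 0)) / real a0" by (simp add: g_def a0_def er_def es_def)
  finally show ?thesis using a0 by (simp add: a0_def[symmetric] right_diff_distrib)
qed

definition H2 :: "(nat \<Rightarrow> nat \<Rightarrow> nat) \<Rightarrow> (nat \<Rightarrow> edge) set \<Rightarrow> complex" where
  "H2 A c = cis (2 * pi * tt A (rep c))"

lemma case2_H2_aeclass:
  assumes v: "v \<in> ECinf N A" and B01: "\<forall>i<N. \<forall>j<N. B i j \<in> {0, 1}" and K: "Kv B v = 0"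
    and s: "supA A v = \<infinity>" and x: "x \<in> FE N A v"
  shows "H2 A (aeclass N A B x) = cis (2 * pi * tt A x)"
proof -
  have r: "ae_rel N A B x (rep (aeclass N A B x))" "rep (aeclass N A B x) \<in> FE N A v"
    using rep_FE[OF x] by auto
  then have "tt A (rep (aeclass N A B x)) - tt A x \<in> \<int>"
    using case2_rel[OF v B01 K s x r(2)] by blast
  then show ?thesis unfolding H2_def by (rule cis_int)
qed

lemma case2_homeo:
  assumes v: "v \<in> ECinf N A" and B01: "\<forall>i<N. \<forall>j<N. B i j \<in> {0, 1}" and K: "Kv B v = 0"
    and s: "supA A v = \<infinity>"
  shows "homeomorphic_map (fibreJ N A B v) (top_of_set (sphere (0::complex) 1)) (H2 A)"
proof (rule continuous_imp_homeomorphic_map)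
  show "continuous_map (fibreJ N A B v) (top_of_set (sphere 0 1)) (H2 A)"
  proof (rule continuous_compose_quotient_map[OF QF])
    have c: "continuous_map (fibreE N A v) euclidean ((\<lambda>r. cis (2 * pi * r)) \<circ> tt A)"
      by (rule continuous_map_compose[OF tt_cont[OF v s] cis_cont])
    have "continuous_map (fibreE N A v) (top_of_set (sphere 0 1)) ((\<lambda>r. cis (2 * pi * r)) \<circ> tt A)"
      unfolding continuous_map_in_subtopology using c by auto
    then show "continuous_map (fibreE N A v) (top_of_set (sphere 0 1)) (H2 A \<circ> aeclass N A B)"
      by (rule continuous_map_eq) (simp add: topspace_fibreE case2_H2_aeclass[OF v B01 K s])
  qed
  show "compact_space (fibreJ N A B v)" by (rule compact_fibreJ[OF v])
  show "Hausdorff_space (top_of_set (sphere (0::complex) 1))"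
    by (rule Hausdorff_space_subtopology[OF Hausdorff_space_euclidean])
  show "H2 A ` topspace (fibreJ N A B v) = topspace (top_of_set (sphere 0 1))"
  proof
    show "H2 A ` topspace (fibreJ N A B v) \<subseteq> topspace (top_of_set (sphere 0 1))"
      by (auto simp: H2_def)
    show "topspace (top_of_set (sphere 0 1)) \<subseteq> H2 A ` topspace (fibreJ N A B v)"
    proof
      fix z :: complex assume "z \<in> topspace (top_of_set (sphere 0 1))"
      then have z: "norm z = 1" by simp
      define \<theta> where "\<theta> = Arg2pi z / (2 * pi)"
      have th: "0 \<le> \<theta>" "\<theta> < 1" using Arg2pi[of z] by (auto simp: \<theta>_def divide_simps)
      obtain x where x: "x \<in> FE N A v" "tt A x = \<theta>" using case2_surj[OF v s th] by blast
      have "z = exp (\<i> * complex_of_real (Arg2pi z))" using Arg2pi_eq[of z] z by simp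
      also have "\<dots> = cis (2 * pi * \<theta>)" by (simp add: cis_conv_exp \<theta>_def)
      also have "\<dots> = H2 A (aeclass N A B x)" using case2_H2_aeclass[OF v B01 K s x(1)] x(2) by simp
      finally show "z \<in> H2 A ` topspace (fibreJ N A B v)" using x(1) by (auto simp: topspace_fibreJ)
    qed
  qed
  show "inj_on (H2 A) (topspace (fibreJ N A B v))"
  proof (rule inj_onI)
    fix c d assume c: "c \<in> topspace (fibreJ N A B v)" and d: "d \<in> topspace (fibreJ N A B v)"
      and e: "H2 A c = H2 A d"
    obtain x where x: "x \<in> FE N A v" "c = aeclass N A B x" using c topspace_fibreJ by blast
    obtain y where y: "y \<in> FE N A v" "d = aeclass N A B y" using d topspace_fibreJ by blast
    have "cis (2 * pi * tt A y) = cis (2 * pi * tt A x)"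
      using e x y case2_H2_aeclass[OF v B01 K s] by metis
    then have "tt A y - tt A x \<in> \<int>" by (rule cis_inj)
    then have "ae_rel N A B x y" using case2_rel[OF v B01 K s x(1) y(1)] by blast
    then show "c = d" using x y aeclass_eq_FE by blast
  qed
qed

lemma case2_equiv:
  assumes v: "v \<in> ECinf N A" and B01: "\<forall>i<N. \<forall>j<N. B i j \<in> {0, 1}" and K: "Kv B v = 0"
    and s: "supA A v = \<infinity>" and c: "c \<in> topspace (fibreJ N A B v)"
  shows "H2 A (sigJ N A B c) = (H2 A c) ^ A (fst (v 0)) (snd (v 0))"
proof -
  define r where "r = rep c"
  have r: "r \<in> FE N A v" using rep_fibreJ(1)[OF c] by (simp add: r_def)
  have rE: "r \<in> EAinf N A" using r FE_sub by blast
  have sr: "shift r \<in> FE N A (shift v)" by (rule FE_shift[OF r])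
  have a0: "A (er (r 0)) (es (r 0)) = A (fst (v 0)) (snd (v 0))"
  proof -
    have "(er (r 0), es (r 0)) = v 0" using FE_piE[OF r] by (auto simp: piE_def fun_eq_iff)
    then show ?thesis by (metis fst_conv snd_conv)
  qed
  have "H2 A (sigJ N A B c) = cis (2 * pi * tt A (shift r))"
    unfolding sigJ_rep r_def[symmetric]
    by (rule case2_H2_aeclass[OF ECinf_shift[OF v] B01 Kv_shift_0[OF K] supA_shift[OF v s] sr])
  also have "tt A (shift r) = real (A (fst (v 0)) (snd (v 0))) * tt A r - real_of_int (dig (r 0))"
    using tt_shift[OF rE] a0 by simp
  also have "cis (2 * pi * (real (A (fst (v 0)) (snd (v 0))) * tt A r - real_of_int (dig (r 0))))
      = cis (2 * pi * (real (A (fst (v 0)) (snd (v 0))) * tt A r))"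
    by (rule cis_int) simp
  also have "\<dots> = (cis (2 * pi * tt A r)) ^ A (fst (v 0)) (snd (v 0))"
  proof -
    have "(cis (2 * pi * tt A r)) ^ A (fst (v 0)) (snd (v 0)) = cis (real (A (fst (v 0)) (snd (v 0))) * (2 * pi * tt A r))"
      by (rule Complex.DeMoivre)
    moreover have "real (A (fst (v 0)) (snd (v 0))) * (2 * pi * tt A r) = 2 * pi * (real (A (fst (v 0)) (snd (v 0))) * tt A r)"
      by (simp only: ac_simps)
    ultimately show ?thesis by simp
  qed
  finally show ?thesis by (simp add: H2_def r_def)
qed

lemma case3_single:
  assumes v: "v \<in> ECinf N A" and B01: "\<forall>i<N. \<forall>j<N. B i j \<in> {0, 1}" and K: "Kv B v = 0"
    and s: "supA A v < \<infinity>"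
  shows "topspace (fibreJ N A B v) = {aeclass N A B (x0 v)}"
proof -
  have x0: "x0 v \<in> FE N A v" by (rule x0_FE[OF v])
  have "aeclass N A B x = aeclass N A B (x0 v)" if "x \<in> FE N A v" for x
    using case3_rel[OF v B01 K s x0 that] aeclass_eq_FE[OF x0] by metis
  then show ?thesis unfolding topspace_fibreJ using x0 by blast
qed


lemma case4_rel:
  assumes K: "Kv B v = enat K" and K0: "0 < K" and x: "x \<in> FE N A v" and y: "y \<in> FE N A v"
  shows "ae_rel N A B x y \<longleftrightarrow> (\<forall>j<K. x j = y j) \<and> ae_rel N A B ((shift ^^ K) x) ((shift ^^ K) y)"
proof -
  obtain k where k: "K = Suc k" using K0 by (cases K) auto
  have bz: "Bz B v k" using K k Kv_Suc by blast
  have "(er (x k), es (x k)) = v k" using FE_piE[OF x] by (auto simp: piE_def fun_eq_iff)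
  then have b: "B (er (x k)) (es (x k)) = 0" using bz by (metis fst_conv snd_conv)
  show ?thesis
  proof
    assume ae: "ae_rel N A B x y"
    have "\<forall>j\<le>k. x j = y j" by (rule ae_zeroB[OF ae b])
    then have "\<forall>j<K. x j = y j" using k by (simp add: less_Suc_eq_le)
    moreover have "ae_rel N A B ((shift ^^ K) x) ((shift ^^ K) y)" by (rule ae_shift_pow[OF ae])
    ultimately show "(\<forall>j<K. x j = y j) \<and> ae_rel N A B ((shift ^^ K) x) ((shift ^^ K) y)" by blast
  next
    assume "(\<forall>j<K. x j = y j) \<and> ae_rel N A B ((shift ^^ K) x) ((shift ^^ K) y)"
    then show "ae_rel N A B x y"
      using ae_extend[OF FE_EAinf[OF x] FE_EAinf[OF y] K0] b k by (simp del: funpow.simps)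
  qed
qed

definition G4 :: "nat \<Rightarrow> (nat \<Rightarrow> nat \<Rightarrow> nat) \<Rightarrow> (nat \<Rightarrow> nat \<Rightarrow> int) \<Rightarrow> nat \<Rightarrow> (nat \<Rightarrow> edge) set \<Rightarrow> (nat \<Rightarrow> edge) set \<times> edge list" where
  "G4 N A B K c = (aeclass N A B ((shift ^^ K) (rep c)), rev (map (rep c) [0..<K]))"

lemma G4_aeclass:
  assumes K: "Kv B v = enat K" and K0: "0 < K" and x: "x \<in> FE N A v"
  shows "G4 N A B K (aeclass N A B x) = (aeclass N A B ((shift ^^ K) x), rev (map x [0..<K]))"
proof -
  define r where "r = rep (aeclass N A B x)"
  have r: "ae_rel N A B x r" "r \<in> FE N A v" using rep_FE[OF x] by (auto simp: r_def)
  have e: "\<forall>j<K. x j = r j" and ae: "ae_rel N A B ((shift ^^ K) x) ((shift ^^ K) r)"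
    using case4_rel[OF K K0 x r(2)] r(1) by auto
  have "aeclass N A B ((shift ^^ K) r) = aeclass N A B ((shift ^^ K) x)"
    using aeclass_eq[OF EAinf_shift_pow[OF FE_EAinf[OF x]]] ae by (metis)
  moreover have "map r [0..<K] = map x [0..<K]" using e by (simp add: map_eq_conv)
  ultimately show ?thesis by (simp add: G4_def r_def[symmetric])
qed

lemma lastK_Pv: "x \<in> FE N A v \<Longrightarrow> rev (map x [0..<K]) \<in> Pv N A K v"
proof -
  assume x: "x \<in> FE N A v"
  have "map (\<lambda>e. (er e, es e)) (rev (map x [0..<K])) = rev (map (piE x) [0..<K])"
    by (simp add: rev_map piE_def)
  also have "\<dots> = rev (map v [0..<K])" using FE_piE[OF x] by simp
  finally show ?thesis using FE_EAinf[OF x] by (auto simp: Pv_def intro: EAinf_edge)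
qed

lemma sigK_cont: "continuous_map (fibreE N A v) (fibreE N A ((shift ^^ K) v)) (shift ^^ K)"
  unfolding fibreE_PT continuous_map_in_subtopology
proof
  show "continuous_map (subtopology (PT N A) (FE N A v)) (PT N A) (shift ^^ K)"
    unfolding continuous_map_componentwise_UNIV
  proof
    fix k
    show "continuous_map (subtopology (PT N A) (FE N A v)) (discrete_topology (edges N A)) (\<lambda>x. (shift ^^ K) x k)"
    proof (rule LC_cont[OF FE_sub_PT])
      fix x assume x: "x \<in> FE N A v"
      show "(shift ^^ K) x k \<in> edges N A" using x FE_sub EAinf_edge by (simp add: shift_pow) blast
      show "\<exists>n. \<forall>y\<in>FE N A v. (\<forall>j<n. y j = x j) \<longrightarrow> (shift ^^ K) y k = (shift ^^ K) x k"
        by (intro exI[of _ "Suc (k + K)"]) (simp add: shift_pow)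
    qed
  qed
  show "shift ^^ K \<in> topspace (subtopology (PT N A) (FE N A v)) \<rightarrow> FE N A ((shift ^^ K) v)"
    using FE_shift_pow by (auto simp: topspace_subtopology)
qed

lemma lastK_cont: "continuous_map (fibreE N A v) (discrete_topology (Pv N A K v)) (\<lambda>x. rev (map x [0..<K]))"
  unfolding fibreE_PT
proof (rule LC_cont[OF FE_sub_PT])
  fix x assume x: "x \<in> FE N A v"
  show "rev (map x [0..<K]) \<in> Pv N A K v" by (rule lastK_Pv[OF x])
  show "\<exists>n. \<forall>y\<in>FE N A v. (\<forall>j<n. y j = x j) \<longrightarrow> rev (map y [0..<K]) = rev (map x [0..<K])"
    by (intro exI[of _ K]) (simp add: map_eq_conv)
qed

lemma build_x:
  assumes v: "v \<in> ECinf N A" and z: "z \<in> FE N A ((shift ^^ K) v)" and mu: "\<mu> \<in> Pv N A K v"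
  shows "\<exists>x\<in>FE N A v. (shift ^^ K) x = z \<and> rev (map x [0..<K]) = \<mu>"
proof -
  have ml: "length \<mu> = K" and me: "set \<mu> \<subseteq> edges N A"
    and mm: "map (\<lambda>e. (er e, es e)) \<mu> = rev (map v [0..<K])" using mu by (auto simp: Pv_def)
  define x where "x j = (if j < K then \<mu> ! (K - 1 - j) else z (j - K))" for j
  have zE: "\<And>n. z n \<in> edges N A" using z FE_sub EAinf_edge by blast
  have zp: "\<And>n. piE z n = v (n + K)" using FE_piE[OF z] by (simp add: shift_pow)
  have xe: "x j \<in> edges N A" for j
  proof (cases "j < K")
    case True
    then have "\<mu> ! (K - 1 - j) \<in> set \<mu>" using ml by (intro nth_mem) simp
    then show ?thesis using True me by (auto simp: x_def)
  next
    case False then show ?thesis using zE by (simp add: x_def)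
  qed
  have xp: "piE x j = v j" for j
  proof (cases "j < K")
    case True
    have i: "K - 1 - j < K" using True by simp
    have "piE x j = (map (\<lambda>e. (er e, es e)) \<mu>) ! (K - 1 - j)"
      using True ml i by (simp add: x_def piE_def)
    also have "\<dots> = rev (map v [0..<K]) ! (K - 1 - j)" by (simp only: mm)
    also have "\<dots> = v j" using True by (simp add: rev_nth)
    finally show ?thesis .
  next
    case False
    then have "piE x j = piE z (j - K)" by (simp add: x_def piE_def)
    also have "\<dots> = v j" using zp[of "j - K"] False by simp
    finally show ?thesis .
  qed
  have xFE: "x \<in> FE N A v" unfolding FE_eq[OF v] using xe xp by (simp add: PiE_iff)
  have "(shift ^^ K) x = z" by (simp add: shift_pow x_def fun_eq_iff)
  moreover have "rev (map x [0..<K]) = \<mu>"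
  proof (rule nth_equalityI)
    show "length (rev (map x [0..<K])) = length \<mu>" using ml by simp
    fix i assume "i < length (rev (map x [0..<K]))"
    then have i: "i < K" by simp
    then show "rev (map x [0..<K]) ! i = \<mu> ! i" by (simp add: rev_nth x_def)
  qed
  ultimately show ?thesis using xFE by blast
qed

lemma case4_homeo:
  assumes v: "v \<in> ECinf N A" and K: "Kv B v = enat K" and K0: "0 < K"
    and H: "Hausdorff_space (fibreJ N A B ((shift ^^ K) v))"
  shows "homeomorphic_map (fibreJ N A B v)
           (prod_topology (fibreJ N A B ((shift ^^ K) v)) (discrete_topology (Pv N A K v))) (G4 N A B K)"
proof (rule continuous_imp_homeomorphic_map)
  show "continuous_map (fibreJ N A B v)
           (prod_topology (fibreJ N A B ((shift ^^ K) v)) (discrete_topology (Pv N A K v))) (G4 N A B K)"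
  proof (rule continuous_compose_quotient_map[OF QF])
    have c1: "continuous_map (fibreE N A v) (fibreJ N A B ((shift ^^ K) v)) (aeclass N A B \<circ> (shift ^^ K))"
      by (rule continuous_map_compose[OF sigK_cont quotient_imp_continuous_map[OF QF]])
    have "continuous_map (fibreE N A v)
           (prod_topology (fibreJ N A B ((shift ^^ K) v)) (discrete_topology (Pv N A K v)))
           (\<lambda>x. (aeclass N A B ((shift ^^ K) x), rev (map x [0..<K])))"
      unfolding continuous_map_pairwise using c1 lastK_cont by (simp add: o_def)
    then show "continuous_map (fibreE N A v)
           (prod_topology (fibreJ N A B ((shift ^^ K) v)) (discrete_topology (Pv N A K v))) (G4 N A B K \<circ> aeclass N A B)"
      by (rule continuous_map_eq) (simp add: topspace_fibreE G4_aeclass[OF K K0])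
  qed
  show "compact_space (fibreJ N A B v)" by (rule compact_fibreJ[OF v])
  show "Hausdorff_space (prod_topology (fibreJ N A B ((shift ^^ K) v)) (discrete_topology (Pv N A K v)))"
    using H by (simp add: Hausdorff_space_prod_topology)
  show "G4 N A B K ` topspace (fibreJ N A B v) =
        topspace (prod_topology (fibreJ N A B ((shift ^^ K) v)) (discrete_topology (Pv N A K v)))"
  proof
    show "G4 N A B K ` topspace (fibreJ N A B v) \<subseteq>
        topspace (prod_topology (fibreJ N A B ((shift ^^ K) v)) (discrete_topology (Pv N A K v)))"
    proof
      fix p assume "p \<in> G4 N A B K ` topspace (fibreJ N A B v)"
      then obtain x where x: "x \<in> FE N A v" and p: "p = G4 N A B K (aeclass N A B x)"
        unfolding topspace_fibreJ by blast
      have "p = (aeclass N A B ((shift ^^ K) x), rev (map x [0..<K]))" using p G4_aeclass[OF K K0 x] by simp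
      then show "p \<in> topspace (prod_topology (fibreJ N A B ((shift ^^ K) v)) (discrete_topology (Pv N A K v)))"
        using FE_shift_pow[OF x] lastK_Pv[OF x] by (simp add: topspace_fibreJ)
    qed
    show "topspace (prod_topology (fibreJ N A B ((shift ^^ K) v)) (discrete_topology (Pv N A K v)))
         \<subseteq> G4 N A B K ` topspace (fibreJ N A B v)"
    proof
      fix p assume "p \<in> topspace (prod_topology (fibreJ N A B ((shift ^^ K) v)) (discrete_topology (Pv N A K v)))"
      then obtain z \<mu> where z: "z \<in> FE N A ((shift ^^ K) v)" and mu: "\<mu> \<in> Pv N A K v"
        and p: "p = (aeclass N A B z, \<mu>)" by (auto simp: topspace_fibreJ)
      obtain x where x: "x \<in> FE N A v" "(shift ^^ K) x = z" "rev (map x [0..<K]) = \<mu>"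
        using build_x[OF v z mu] by blast
      have "G4 N A B K (aeclass N A B x) = p" using G4_aeclass[OF K K0 x(1)] x p by simp
      then show "p \<in> G4 N A B K ` topspace (fibreJ N A B v)" using x(1) by (auto simp: topspace_fibreJ)
    qed
  qed
  show "inj_on (G4 N A B K) (topspace (fibreJ N A B v))"
  proof (rule inj_onI)
    fix c d assume c: "c \<in> topspace (fibreJ N A B v)" and d: "d \<in> topspace (fibreJ N A B v)"
      and e: "G4 N A B K c = G4 N A B K d"
    obtain x where x: "x \<in> FE N A v" "c = aeclass N A B x" using c topspace_fibreJ by blast
    obtain y where y: "y \<in> FE N A v" "d = aeclass N A B y" using d topspace_fibreJ by blast
    have e1: "aeclass N A B ((shift ^^ K) x) = aeclass N A B ((shift ^^ K) y)"
      and e2: "rev (map x [0..<K]) = rev (map y [0..<K])"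
      using e x y G4_aeclass[OF K K0] by auto
    have "ae_rel N A B ((shift ^^ K) x) ((shift ^^ K) y)"
      using e1 aeclass_eq[OF EAinf_shift_pow[OF FE_EAinf[OF x(1)]]] by blast
    moreover have "\<forall>j<K. x j = y j" using e2 by (simp add: map_eq_conv)
    ultimately have "ae_rel N A B x y" using case4_rel[OF K K0 x(1) y(1)] by blast
    then show "c = d" using x y aeclass_eq_FE by blast
  qed
qed

lemma case4_equiv:
  assumes K: "Kv B v = enat K" and K1: "1 < K" and c: "c \<in> topspace (fibreJ N A B v)"
  shows "G4 N A B (K - 1) (sigJ N A B c) = (fst (G4 N A B K c), butlast (snd (G4 N A B K c)))"
proof -
  define r where "r = rep c"
  have r: "r \<in> FE N A v" using rep_fibreJ(1)[OF c] by (simp add: r_def)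
  have sr: "shift r \<in> FE N A (shift v)" by (rule FE_shift[OF r])
  obtain k where k: "K = Suc (Suc k)" using less_imp_Suc_add[OF K1] by auto
  have K': "Kv B (shift v) = enat (K - 1)" using Kv_shift_Suc K k by simp
  have "G4 N A B (K - 1) (sigJ N A B c) = (aeclass N A B ((shift ^^ (K - 1)) (shift r)), rev (map (shift r) [0..<K - 1]))"
    unfolding sigJ_rep r_def[symmetric] by (rule G4_aeclass[OF K' _ sr]) (simp add: k)
  also have "(shift ^^ (K - 1)) (shift r) = (shift ^^ K) r"
    by (simp add: shift_pow shift_def k)
  also have "rev (map (shift r) [0..<K - 1]) = butlast (rev (map r [0..<K]))"
  proof -
    have "[0..<K] = 0 # map Suc [0..<K - 1]" by (simp add: k map_Suc_upt upt_conv_Cons del: upt_Suc)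
    then show ?thesis by (simp add: butlast_rev shift_def map_map o_def del: upt_Suc)
  qed
  finally show ?thesis by (simp add: G4_def r_def)
qed

lemma Hausdorff_case0:
  assumes v: "v \<in> ECinf N A" and B01: "\<forall>i<N. \<forall>j<N. B i j \<in> {0, 1}" and K: "Kv B v = 0"
  shows "Hausdorff_space (fibreJ N A B v)"
proof (cases "supA A v = \<infinity>")
  case True
  have "fibreJ N A B v homeomorphic_space top_of_set (sphere (0::complex) 1)"
    using case2_homeo[OF v B01 K True] homeomorphic_space by blast
  then show ?thesis
    using homeomorphic_Hausdorff_space Hausdorff_space_subtopology[OF Hausdorff_space_euclidean] by blast
next
  case False
  then have "supA A v < \<infinity>" by (cases "supA A v") auto
  then have "topspace (fibreJ N A B v) = {aeclass N A B (x0 v)}" by (rule case3_single[OF v B01 K])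
  then show ?thesis unfolding Hausdorff_space_def by auto
qed


lemma piE_ECinf: "x \<in> EAinf N A \<Longrightarrow> piE x \<in> ECinf N A"
proof -
  assume x: "x \<in> EAinf N A"
  have "er (x n) < N \<and> es (x n) < N \<and> 0 < A (er (x n)) (es (x n))" for n
  proof -
    obtain a b m where e: "x n = (a, b, m)" by (cases "x n")
    have "(a, b, m) \<in> edges N A" using EAinf_edge[OF x, of n] e by simp
    then show ?thesis using e by (simp add: edges_iff er_def es_def)
  qed
  moreover have "es (x (Suc n)) = er (x n)" for n using EAinf_conn[OF x] .
  ultimately show ?thesis by (simp add: ECinf_def piE_def)
qed

lemma piJ_coord_cont: "continuous_map (limit_space N A B) (discrete_topology UNIV) (\<lambda>c. piJ c n)"
proof (rule continuous_compose_quotient_map[OF quotient_J])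
  have "continuous_map (EAtop N A) (discrete_topology UNIV) (\<lambda>x. piE x n)"
    unfolding EAtop_def
  proof (rule LC_cont[OF EAinf_sub])
    fix x assume "x \<in> EAinf N A"
    show "piE x n \<in> UNIV" by simp
    show "\<exists>m. \<forall>y\<in>EAinf N A. (\<forall>j<m. y j = x j) \<longrightarrow> piE y n = piE x n"
      by (intro exI[of _ "Suc n"]) (simp add: piE_def)
  qed
  then show "continuous_map (EAtop N A) (discrete_topology UNIV) ((\<lambda>c. piJ c n) \<circ> aeclass N A B)"
    by (rule continuous_map_eq) (simp add: topspace_EAtop piJ_aeclass)
qed

lemma const_on_connected:
  assumes "continuous_map X (discrete_topology T) f" "connectedin X C" "a \<in> C" "b \<in> C"
  shows "f a = f b"
proof -
  have "connectedin (discrete_topology T) (f ` C)" by (rule connectedin_continuous_map_image[OF assms(1,2)])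
  then obtain z where "f ` C \<subseteq> {z}" unfolding connectedin_discrete_topology by blast
  then show ?thesis using assms(3,4) by blast
qed

lemma comp_in_fibre:
  assumes C: "C \<in> connected_components_of (limit_space N A B)" and c: "c \<in> C"
  shows "C \<subseteq> Vs N A B (piJ c)" "piJ c \<in> ECinf N A"
proof -
  have cc: "connectedin (limit_space N A B) C" by (rule connectedin_connected_components_of[OF C])
  have sub: "C \<subseteq> topspace (limit_space N A B)" by (rule connected_components_of_subset[OF C])
  have "piJ d = piJ c" if "d \<in> C" for d
  proof
    fix n show "piJ d n = piJ c n" by (rule const_on_connected[OF piJ_coord_cont cc that c])
  qed
  then show "C \<subseteq> Vs N A B (piJ c)" using sub by (auto simp: Vs_def)
  obtain x where x: "x \<in> EAinf N A" "c = aeclass N A B x" using sub c topspace_J by blast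
  show "piJ c \<in> ECinf N A" using piE_ECinf[OF x(1)] x piJ_aeclass by metis
qed

lemma fibreE_TD:
  assumes D: "connectedin (fibreE N A v) D" and x: "x \<in> D" and y: "y \<in> D"
  shows "x = y"
proof
  fix n
  have "continuous_map (fibreE N A v) (discrete_topology (edges N A)) (\<lambda>x. x n)"
    unfolding fibreE_PT
  proof (rule LC_cont[OF FE_sub_PT])
    fix z assume "z \<in> FE N A v"
    then show "z n \<in> edges N A" using FE_sub EAinf_edge by blast
    show "\<exists>m. \<forall>y\<in>FE N A v. (\<forall>j<m. y j = z j) \<longrightarrow> y n = z n" by (intro exI[of _ "Suc n"]) simp
  qed
  then show "x n = y n" by (rule const_on_connected[OF _ D x y])
qed

lemma connectedin_fibreJ: "connectedin (fibreJ N A B v) D \<longleftrightarrow> connectedin (limit_space N A B) D \<and> D \<subseteq> Vs N A B v"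
  unfolding fibreJ_eq by (rule connectedin_subtopology)

lemma circle_connected: "connected_space (top_of_set (sphere (0::complex) 1))"
  using connected_sphere[of "0::complex" 1] by (simp add: connected_space_subtopology)

lemma components:
  assumes B01: "\<forall>i<N. \<forall>j<N. B i j \<in> {0, 1}"
    and C: "C \<in> connected_components_of (limit_space N A B)"
  shows "(\<exists>p. C = {p}) \<or>
        subtopology (limit_space N A B) C homeomorphic_space top_of_set (sphere (0::complex) 1)"
proof -
  obtain c where c: "c \<in> C" using nonempty_connected_components_of[OF C] by blast
  define v where "v = piJ c"
  have CV: "C \<subseteq> Vs N A B v" and v: "v \<in> ECinf N A" using comp_in_fibre[OF C c] by (auto simp: v_def)
  have cc: "connectedin (limit_space N A B) C" by (rule connectedin_connected_components_of[OF C])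
  have ccF: "connectedin (fibreJ N A B v) C" using cc CV connectedin_fibreJ by blast
  have tsF: "topspace (fibreJ N A B v) = Vs N A B v"
    unfolding fibreJ_eq by (simp add: Vs_def topspace_subtopology) blast
  have cV: "c \<in> Vs N A B v" using c CV by blast
  have maxl: "S \<subseteq> C" if "connectedin (limit_space N A B) S" "c \<in> S" for S
    using connected_components_of_maximal[OF C that(1)] that(2) c by (auto simp: disjnt_def)
  have single: "C = {c}" if "\<And>d. d \<in> C \<Longrightarrow> d = c"
    using that c by blast
  consider "Kv B v = \<infinity>" | "Kv B v = 0" | k where "Kv B v = enat (Suc k)" using Kv_cases[of B v] by (elim disjE exE) auto
  then show ?thesis
  proof cases
    case 1
    have hm: "homeomorphic_map (fibreJ N A B v) (fibreE N A v) rep" by (rule case1_homeo[OF 1])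
    have "connectedin (fibreE N A v) (rep ` C)"
      by (rule connectedin_continuous_map_image[OF homeomorphic_imp_continuous_map[OF hm] ccF])
    then have "rep d = rep c" if "d \<in> C" for d using fibreE_TD that c by blast
    then have "d = c" if "d \<in> C" for d
      using rep_fibreJ(2)[of _ N A B v] that c CV tsF by (metis subsetD)
    then show ?thesis using single by blast
  next
    case 2
    show ?thesis
    proof (cases "supA A v = \<infinity>")
      case True
      have hm: "homeomorphic_map (fibreJ N A B v) (top_of_set (sphere (0::complex) 1)) (H2 A)"
        by (rule case2_homeo[OF v B01 2 True])
      then have hs: "fibreJ N A B v homeomorphic_space top_of_set (sphere (0::complex) 1)"
        using homeomorphic_space by blast
      then have "connected_space (fibreJ N A B v)" using homeomorphic_connected_space circle_connected by blast
      then have "connectedin (limit_space N A B) (Vs N A B v)"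
        using connectedin_topspace[of "fibreJ N A B v"] tsF connectedin_fibreJ by metis
      then have "Vs N A B v \<subseteq> C" using maxl cV by blast
      then have "C = Vs N A B v" using CV by blast
      then have "subtopology (limit_space N A B) C = fibreJ N A B v" by (simp add: fibreJ_eq)
      then show ?thesis using hs by simp
    next
      case False
      then have "supA A v < \<infinity>" by (cases "supA A v") auto
      then have "topspace (fibreJ N A B v) = {aeclass N A B (x0 v)}" by (rule case3_single[OF v B01 2])
      then have "d = c" if "d \<in> C" for d using that c CV tsF by blast
      then show ?thesis using single by blast
    qed
  next
    case 3
    define K where "K = Suc k"
    have K: "Kv B v = enat K" and K0: "0 < K" using 3 by (auto simp: K_def)
    define w where "w = (shift ^^ K) v"
    have w: "w \<in> ECinf N A" "Kv B w = 0" using ECinf_shift_pow[OF v] Kv_shift_pow[OF K] by (auto simp: w_def)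
    have hm: "homeomorphic_map (fibreJ N A B v) (prod_topology (fibreJ N A B w) (discrete_topology (Pv N A K v))) (G4 N A B K)"
      unfolding w_def by (rule case4_homeo[OF v K K0 Hausdorff_case0[OF w(1)[unfolded w_def] B01 w(2)[unfolded w_def]]])
    define \<phi> where "\<phi> = G4 N A B K"
    have cphi: "continuous_map (fibreJ N A B v) (prod_topology (fibreJ N A B w) (discrete_topology (Pv N A K v))) \<phi>"
      using homeomorphic_imp_continuous_map[OF hm] by (simp add: \<phi>_def)
    have csnd: "continuous_map (fibreJ N A B v) (discrete_topology (Pv N A K v)) (snd \<circ> \<phi>)"
      using cphi unfolding continuous_map_pairwise by blast
    have cfst: "continuous_map (fibreJ N A B v) (fibreJ N A B w) (fst \<circ> \<phi>)"
      using cphi unfolding continuous_map_pairwise by blast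
    have injphi: "inj_on \<phi> (topspace (fibreJ N A B v))"
      using homeomorphic_imp_injective_map[OF hm] by (simp add: \<phi>_def)
    have surjphi: "\<phi> ` topspace (fibreJ N A B v) = topspace (fibreJ N A B w) \<times> Pv N A K v"
      using homeomorphic_imp_surjective_map[OF hm] by (simp add: \<phi>_def)
    define \<mu> where "\<mu> = snd (\<phi> c)"
    have sndC: "snd (\<phi> d) = \<mu>" if "d \<in> C" for d
      using const_on_connected[OF csnd ccF that c] by (simp add: \<mu>_def)
    show ?thesis
    proof (cases "supA A w = \<infinity>")
      case False
      then have "supA A w < \<infinity>" by (cases "supA A w") auto
      then have tw: "topspace (fibreJ N A B w) = {aeclass N A B (x0 w)}" by (rule case3_single[OF w(1) B01 w(2)])
      have "d = c" if "d \<in> C" for d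
      proof -
        have dV: "d \<in> topspace (fibreJ N A B v)" and cV': "c \<in> topspace (fibreJ N A B v)"
          using that c CV tsF by auto
        have "fst (\<phi> d) \<in> topspace (fibreJ N A B w)" "fst (\<phi> c) \<in> topspace (fibreJ N A B w)"
          using continuous_map_image_subset_topspace[OF cfst] dV cV' by auto
        then have "fst (\<phi> d) = fst (\<phi> c)" using tw by simp
        then have "\<phi> d = \<phi> c" using sndC[OF that] sndC[OF c] by (simp add: prod_eq_iff)
        then show "d = c" using injphi dV cV' by (auto dest: inj_onD)
      qed
      then show ?thesis using single by blast
    next
      case True
      have hw: "fibreJ N A B w homeomorphic_space top_of_set (sphere (0::complex) 1)"
        using case2_homeo[OF w(1) B01 w(2) True] homeomorphic_space by blast
      have muP: "\<mu> \<in> Pv N A K v"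
        using continuous_map_image_subset_topspace[OF csnd] c CV tsF by (auto simp: \<mu>_def)
      define S where "S = {d \<in> Vs N A B v. snd (\<phi> d) = \<mu>}"
      have hS: "homeomorphic_map (subtopology (fibreJ N A B v) S)
                  (subtopology (prod_topology (fibreJ N A B w) (discrete_topology (Pv N A K v)))
                      (topspace (fibreJ N A B w) \<times> {\<mu>})) \<phi>"
      proof (rule homeomorphic_map_subtopologies)
        show "homeomorphic_map (fibreJ N A B v) (prod_topology (fibreJ N A B w) (discrete_topology (Pv N A K v))) \<phi>"
          using hm by (simp add: \<phi>_def)
        show "\<phi> ` (topspace (fibreJ N A B v) \<inter> S) =
          topspace (prod_topology (fibreJ N A B w) (discrete_topology (Pv N A K v))) \<inter> (topspace (fibreJ N A B w) \<times> {\<mu>})"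
        proof
          show "\<phi> ` (topspace (fibreJ N A B v) \<inter> S) \<subseteq>
              topspace (prod_topology (fibreJ N A B w) (discrete_topology (Pv N A K v))) \<inter> (topspace (fibreJ N A B w) \<times> {\<mu>})"
          proof
            fix p assume "p \<in> \<phi> ` (topspace (fibreJ N A B v) \<inter> S)"
            then obtain d where d: "d \<in> topspace (fibreJ N A B v)" "d \<in> S" "p = \<phi> d" by blast
            have p1: "p \<in> topspace (fibreJ N A B w) \<times> Pv N A K v" using surjphi d by blast
            have p2: "snd p = \<mu>" using d by (simp add: S_def)
            have "p = (fst p, snd p)" by simp
            then have "p \<in> topspace (fibreJ N A B w) \<times> {\<mu>}" using p1 p2 by (metis SigmaE SigmaI fst_conv singletonI)
            then show "p \<in> topspace (prod_topology (fibreJ N A B w) (discrete_topology (Pv N A K v))) \<inter> (topspace (fibreJ N A B w) \<times> {\<mu>})"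
              using p1 by simp
          qed
          show "topspace (prod_topology (fibreJ N A B w) (discrete_topology (Pv N A K v))) \<inter> (topspace (fibreJ N A B w) \<times> {\<mu>})
              \<subseteq> \<phi> ` (topspace (fibreJ N A B v) \<inter> S)"
          proof
            fix p assume p: "p \<in> topspace (prod_topology (fibreJ N A B w) (discrete_topology (Pv N A K v))) \<inter> (topspace (fibreJ N A B w) \<times> {\<mu>})"
            then obtain d where d: "d \<in> topspace (fibreJ N A B v)" "p = \<phi> d" using surjphi by auto
            then have "snd (\<phi> d) = \<mu>" using p by auto
            then show "p \<in> \<phi> ` (topspace (fibreJ N A B v) \<inter> S)" using d tsF by (auto simp: S_def)
          qed
        qed
      qed
      have eqS: "subtopology (prod_topology (fibreJ N A B w) (discrete_topology (Pv N A K v)))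
                      (topspace (fibreJ N A B w) \<times> {\<mu>})
               = prod_topology (fibreJ N A B w) (subtopology (discrete_topology (Pv N A K v)) {\<mu>})"
        by (simp add: subtopology_Times)
      have h2: "fibreJ N A B w homeomorphic_space prod_topology (fibreJ N A B w) (subtopology (discrete_topology (Pv N A K v)) {\<mu>})"
        by (rule homeomorphic_space_prod_topology_sing1) (simp add: muP)
      have sub1: "subtopology (fibreJ N A B v) S = subtopology (limit_space N A B) S"
        unfolding fibreJ_eq subtopology_subtopology by (rule arg_cong[where f="subtopology _"]) (auto simp: S_def)
      have hS2: "subtopology (limit_space N A B) S homeomorphic_space top_of_set (sphere (0::complex) 1)"
      proof -
        have "subtopology (limit_space N A B) S homeomorphic_space
              prod_topology (fibreJ N A B w) (subtopology (discrete_topology (Pv N A K v)) {\<mu>})"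
          using hS eqS sub1 homeomorphic_space by metis
        also have "\<dots> homeomorphic_space fibreJ N A B w" using h2 homeomorphic_space_sym by blast
        also have "\<dots> homeomorphic_space top_of_set (sphere (0::complex) 1)" by (rule hw)
        finally show ?thesis .
      qed
      have "connected_space (subtopology (limit_space N A B) S)"
        using hS2 homeomorphic_connected_space circle_connected by blast
      moreover have "S \<subseteq> topspace (limit_space N A B)" by (auto simp: S_def Vs_def)
      ultimately have "connectedin (limit_space N A B) S" by (simp add: connectedin_def)
      moreover have "c \<in> S" using cV by (simp add: S_def \<mu>_def)
      ultimately have "S \<subseteq> C" using maxl by blast
      moreover have "C \<subseteq> S" using CV sndC by (auto simp: S_def)
      ultimately have "C = S" by blast
      then show ?thesis using hS2 by simp
    qed
  qed
qed


theorem theorem6p1: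
  fixes N :: nat and A :: "nat \<Rightarrow> nat \<Rightarrow> nat" and B :: "nat \<Rightarrow> nat \<Rightarrow> int"
  assumes kp: "katsura_pair N A B"
    and B01: "\<forall>i<N. \<forall>j<N. B i j \<in> {0, 1}"
    and reg: "regular N A B"
  shows
    "(\<forall>C \<in> connected_components_of (limit_space N A B).
        (\<exists>p. C = {p}) \<or>
        subtopology (limit_space N A B) C homeomorphic_space top_of_set (sphere (0::complex) 1))
   \<and> (\<exists>h. (\<forall>v \<in> ECinf N A. Kv B v = \<infinity> \<longrightarrow>
             homeomorphic_map (fibreJ N A B v) (fibreE N A v) (h v)
             \<and> (\<forall>c \<in> topspace (fibreJ N A B v). h (shift v) (sigJ N A B c) = shift (h v c))))
   \<and> (\<exists>h. (\<forall>v \<in> ECinf N A. Kv B v = 0 \<and> supA A v = \<infinity> \<longrightarrow>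
             homeomorphic_map (fibreJ N A B v) (top_of_set (sphere (0::complex) 1)) (h v)
             \<and> (\<forall>c \<in> topspace (fibreJ N A B v).
                  h (shift v) (sigJ N A B c) = (h v c) ^ A (fst (v 0)) (snd (v 0)))))
   \<and> (\<forall>v \<in> ECinf N A. Kv B v = 0 \<and> supA A v < \<infinity> \<longrightarrow>
             (\<exists>p. topspace (fibreJ N A B v) = {p}))
   \<and> (\<exists>h. (\<forall>v \<in> ECinf N A. 0 < Kv B v \<and> Kv B v < \<infinity> \<longrightarrow>
             (let K = the_enat (Kv B v) in
               homeomorphic_map (fibreJ N A B v)
                 (prod_topology (fibreJ N A B ((shift ^^ K) v)) (discrete_topology (Pv N A K v))) (h v)
               \<and> (\<forall>c \<in> topspace (fibreJ N A B v).
                    (if 1 < K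
                     then h (shift v) (sigJ N A B c) = (fst (h v c), butlast (snd (h v c)))
                     else sigJ N A B c = fst (h v c))))))"
  proof (intro conjI)
  show "\<forall>C \<in> connected_components_of (limit_space N A B).
        (\<exists>p. C = {p}) \<or>
        subtopology (limit_space N A B) C homeomorphic_space top_of_set (sphere (0::complex) 1)"
    using components[OF B01] by blast
  show "\<exists>h. (\<forall>v \<in> ECinf N A. Kv B v = \<infinity> \<longrightarrow>
             homeomorphic_map (fibreJ N A B v) (fibreE N A v) (h v)
             \<and> (\<forall>c \<in> topspace (fibreJ N A B v). h (shift v) (sigJ N A B c) = shift (h v c)))"
    by (rule exI[of _ "\<lambda>v. rep"]) (simp add: case1_homeo case1_equiv)
  show "\<exists>h. (\<forall>v \<in> ECinf N A. Kv B v = 0 \<and> supA A v = \<infinity> \<longrightarrow>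
             homeomorphic_map (fibreJ N A B v) (top_of_set (sphere (0::complex) 1)) (h v)
             \<and> (\<forall>c \<in> topspace (fibreJ N A B v).
                  h (shift v) (sigJ N A B c) = (h v c) ^ A (fst (v 0)) (snd (v 0))))"
    by (rule exI[of _ "\<lambda>v. H2 A"]) (simp add: case2_homeo[OF _ B01] case2_equiv[OF _ B01])
  show "\<forall>v \<in> ECinf N A. Kv B v = 0 \<and> supA A v < \<infinity> \<longrightarrow>
             (\<exists>p. topspace (fibreJ N A B v) = {p})"
    using case3_single[OF _ B01] by blast
  show "\<exists>h. (\<forall>v \<in> ECinf N A. 0 < Kv B v \<and> Kv B v < \<infinity> \<longrightarrow>
             (let K = the_enat (Kv B v) in
               homeomorphic_map (fibreJ N A B v)
                 (prod_topology (fibreJ N A B ((shift ^^ K) v)) (discrete_topology (Pv N A K v))) (h v)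
               \<and> (\<forall>c \<in> topspace (fibreJ N A B v).
                    (if 1 < K
                     then h (shift v) (sigJ N A B c) = (fst (h v c), butlast (snd (h v c)))
                     else sigJ N A B c = fst (h v c)))))"
  proof (intro exI[of _ "\<lambda>v. G4 N A B (the_enat (Kv B v))"] ballI impI)
    fix v assume v: "v \<in> ECinf N A" and kk: "0 < Kv B v \<and> Kv B v < \<infinity>"
    define K where "K = the_enat (Kv B v)"
    have K: "Kv B v = enat K" using kk by (cases "Kv B v") (auto simp: K_def)
    have K0: "0 < K" using kk K by (simp add: zero_enat_def)
    have w: "(shift ^^ K) v \<in> ECinf N A" "Kv B ((shift ^^ K) v) = 0"
      using ECinf_shift_pow[OF v] Kv_shift_pow[OF K] by auto
    have hm: "homeomorphic_map (fibreJ N A B v)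
                 (prod_topology (fibreJ N A B ((shift ^^ K) v)) (discrete_topology (Pv N A K v))) (G4 N A B K)"
      by (rule case4_homeo[OF v K K0 Hausdorff_case0[OF w(1) B01 w(2)]])
    have eq: "\<forall>c \<in> topspace (fibreJ N A B v).
                    (if 1 < K
                     then G4 N A B (the_enat (Kv B (shift v))) (sigJ N A B c) = (fst (G4 N A B K c), butlast (snd (G4 N A B K c)))
                     else sigJ N A B c = fst (G4 N A B K c))"
    proof
      fix c assume c: "c \<in> topspace (fibreJ N A B v)"
      show "if 1 < K
                     then G4 N A B (the_enat (Kv B (shift v))) (sigJ N A B c) = (fst (G4 N A B K c), butlast (snd (G4 N A B K c)))
                     else sigJ N A B c = fst (G4 N A B K c)"
      proof (cases "1 < K")
        case True
        obtain k where k: "K = Suc (Suc k)" using less_imp_Suc_add[OF True] by auto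
        have "Kv B (shift v) = enat (K - 1)" using Kv_shift_Suc K k by simp
        then have "the_enat (Kv B (shift v)) = K - 1" by simp
        then show ?thesis using True case4_equiv[OF K True c] by simp
      next
        case False
        then have "K = 1" using K0 by simp
        then show ?thesis by (simp add: G4_def sigJ_rep)
      qed
    qed
    show "let K = the_enat (Kv B v) in
               homeomorphic_map (fibreJ N A B v)
                 (prod_topology (fibreJ N A B ((shift ^^ K) v)) (discrete_topology (Pv N A K v))) (G4 N A B (the_enat (Kv B v)))
               \<and> (\<forall>c \<in> topspace (fibreJ N A B v).
                    (if 1 < K
                     then G4 N A B (the_enat (Kv B (shift v))) (sigJ N A B c) = (fst (G4 N A B (the_enat (Kv B v)) c), butlast (snd (G4 N A B (the_enat (Kv B v)) c)))
                     else sigJ N A B c = fst (G4 N A B (the_enat (Kv B v)) c)))"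
      unfolding Let_def K_def[symmetric] using hm eq by blast
  qed
qed


end
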